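(* Let $k$ be a field. Every finitely presented right $\mathrm{RCFM}(k)$-module has projective dimension at most $1$.
   Context: $\mathrm{RCFM}(k)$ is the $k$-algebra of $\mathbb{N}_0\times\mathbb{N}_0$ matrices over $k$ with finitely many nonzero entries in each row and each column. *)

theory Defs
  imports "HOL-Algebra.Ring"
begin

definition rcfm_carrier :: "(nat \<Rightarrow> nat \<Rightarrow> 'k::field) set" where
  "rcfm_carrier = {A. (\<forall>i. finite {j. A i j \<noteq> 0}) \<and> (\<forall>j. finite {i. A i j \<noteq> 0})}"

definition RCFM :: "(nat \<Rightarrow> nat \<Rightarrow> 'k::field) ring" where
  "RCFM = \<lparr> carrier = rcfm_carrier,
            mult = (\<lambda>A B i j. \<Sum>l\<in>{l. A i l \<noteq> 0}. A i l * B l j),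
            one = (\<lambda>i j. if i = j then 1 else 0),
            zero = (\<lambda>i j. 0),
            add = (\<lambda>A B i j. A i j + B i j) \<rparr>"

text \<open>A right module structure: additive group data (the mult/one fields of the
underlying ring record are unused) plus a right action  rsmult M x r  =  x . r.\<close>

record ('a, 'r) rmodule = "'a ring" +
  rsmult :: "'a \<Rightarrow> 'r \<Rightarrow> 'a"

definition right_module :: "('r, 'c) ring_scheme \<Rightarrow> ('a, 'r, 'd) rmodule_scheme \<Rightarrow> bool" where
  "right_module R M \<longleftrightarrow>
     abelian_group M \<and>
     (\<forall>x\<in>carrier M. \<forall>r\<in>carrier R. rsmult M x r \<in> carrier M) \<and>
     (\<forall>x\<in>carrier M. \<forall>y\<in>carrier M. \<forall>r\<in>carrier R.
        rsmult M (x \<oplus>\<^bsub>M\<^esub> y) r = rsmult M x r \<oplus>\<^bsub>M\<^esub> rsmult M y r) \<and>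
     (\<forall>x\<in>carrier M. \<forall>r\<in>carrier R. \<forall>s\<in>carrier R.
        rsmult M x (r \<oplus>\<^bsub>R\<^esub> s) = rsmult M x r \<oplus>\<^bsub>M\<^esub> rsmult M x s) \<and>
     (\<forall>x\<in>carrier M. \<forall>r\<in>carrier R. \<forall>s\<in>carrier R.
        rsmult M x (r \<otimes>\<^bsub>R\<^esub> s) = rsmult M (rsmult M x r) s) \<and>
     (\<forall>x\<in>carrier M. rsmult M x \<one>\<^bsub>R\<^esub> = x)"

definition rhom :: "('r, 'c) ring_scheme \<Rightarrow> ('a, 'r, 'd) rmodule_scheme
                    \<Rightarrow> ('b, 'r, 'e) rmodule_scheme \<Rightarrow> ('a \<Rightarrow> 'b) set" where
  "rhom R A B = {f. f \<in> carrier A \<rightarrow> carrier B \<and>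
     (\<forall>x\<in>carrier A. \<forall>y\<in>carrier A. f (x \<oplus>\<^bsub>A\<^esub> y) = f x \<oplus>\<^bsub>B\<^esub> f y) \<and>
     (\<forall>x\<in>carrier A. \<forall>r\<in>carrier R. f (rsmult A x r) = rsmult B (f x) r)}"

definition rkernel :: "('a, 'r, 'd) rmodule_scheme \<Rightarrow> ('b, 'r, 'e) rmodule_scheme
                       \<Rightarrow> ('a \<Rightarrow> 'b) \<Rightarrow> 'a set" where
  "rkernel A B f = {x \<in> carrier A. f x = \<zero>\<^bsub>B\<^esub>}"

definition free_rmod :: "('r, 'c) ring_scheme \<Rightarrow> nat \<Rightarrow> (nat \<Rightarrow> 'r, 'r) rmodule" where
  "free_rmod R n = \<lparr> carrier = {v. (\<forall>i<n. v i \<in> carrier R) \<and> (\<forall>i\<ge>n. v i = \<zero>\<^bsub>R\<^esub>)},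
                     mult = (\<lambda>_ _. undefined), one = undefined,
                     zero = (\<lambda>i. \<zero>\<^bsub>R\<^esub>),
                     add = (\<lambda>v w i. if i < n then v i \<oplus>\<^bsub>R\<^esub> w i else \<zero>\<^bsub>R\<^esub>),
                     rsmult = (\<lambda>v r i. if i < n then v i \<otimes>\<^bsub>R\<^esub> r else \<zero>\<^bsub>R\<^esub>) \<rparr>"

definition finitely_presented :: "('r, 'c) ring_scheme \<Rightarrow> ('a, 'r, 'd) rmodule_scheme \<Rightarrow> bool" where
  "finitely_presented R M \<longleftrightarrow>
     (\<exists>n m f g. f \<in> rhom R (free_rmod R m) (free_rmod R n) \<and>
                g \<in> rhom R (free_rmod R n) M \<and>
                g ` carrier (free_rmod R n) = carrier M \<and>
                f ` carrier (free_rmod R m) = rkernel (free_rmod R n) M g)"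

text \<open>Projective: lifting property along surjective homomorphisms, tested against
all right modules whose carrier lives in the type 'b (a parameter, since HOL
cannot quantify over types inside a formula).\<close>

definition projective :: "('r, 'c) ring_scheme \<Rightarrow> ('p, 'r, 'd) rmodule_scheme \<Rightarrow> 'b itself \<Rightarrow> bool" where
  "projective R P (_ :: 'b itself) \<longleftrightarrow>
     (\<forall>(A :: ('b, 'r) rmodule) (B :: ('b, 'r) rmodule) g f.
        right_module R A \<and> right_module R B \<and> g \<in> rhom R A B \<and> g ` carrier A = carrier B \<and>
        f \<in> rhom R P B \<longrightarrow>
        (\<exists>h\<in>rhom R P A. \<forall>x\<in>carrier P. g (h x) = f x))"

definition proj_dim_le1 :: "('r, 'c) ring_scheme \<Rightarrow> ('a, 'r, 'd) rmodule_scheme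
                            \<Rightarrow> 'p itself \<Rightarrow> 'b itself \<Rightarrow> bool" where
  "proj_dim_le1 R M (_ :: 'p itself) (tb :: 'b itself) \<longleftrightarrow>
     (\<exists>(P0 :: ('p, 'r) rmodule) (P1 :: ('p, 'r) rmodule) i d.
        right_module R P0 \<and> right_module R P1 \<and>
        projective R P0 tb \<and> projective R P1 tb \<and>
        i \<in> rhom R P1 P0 \<and> inj_on i (carrier P1) \<and>
        d \<in> rhom R P0 M \<and> d ` carrier P0 = carrier M \<and>
        i ` carrier P1 = rkernel P0 M d)"

end

theory Submission
  imports Defs "HOL-Library.Countable"
begin

definition supp :: "('a \<Rightarrow> 'b::zero) \<Rightarrow> 'a set" where "supp f = {x. f x \<noteq> 0}"

lemma rcfm_mult: "mult RCFM A B = (\<lambda>i j. \<Sum>l\<in>{l. A i l \<noteq> 0}. A i l * B l j)"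
  by (simp add: RCFM_def)
lemma rcfm_add: "add RCFM A B = (\<lambda>i j. A i j + B i j)" by (simp add: RCFM_def)
lemma rcfm_zero: "zero RCFM = (\<lambda>i j. 0)" by (simp add: RCFM_def)
lemma rcfm_one: "one RCFM = (\<lambda>i j. if i = j then 1 else 0)" by (simp add: RCFM_def)
lemma rcfm_carrier: "carrier RCFM = rcfm_carrier" by (simp add: RCFM_def)

lemma mult_eq_sup:
  assumes "finite S" "{l. A i l \<noteq> 0} \<subseteq> S"
  shows "(\<Sum>l\<in>{l. A i l \<noteq> (0::'k::field)}. A i l * B l j) = (\<Sum>l\<in>S. A i l * B l j)"
proof (rule sum.mono_neutral_left)
  show "finite S" by fact
  show "{l. A i l \<noteq> 0} \<subseteq> S" by fact
  show "\<forall>l\<in>S - {l. A i l \<noteq> 0}. A i l * B l j = 0" by simp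
qed

lemma sum_nz_ex: "(\<Sum>l\<in>S. f l) \<noteq> (0::'a::comm_monoid_add) \<Longrightarrow> \<exists>l\<in>S. f l \<noteq> 0"
  by (metis sum.neutral)

lemma rcfm_mult_closed:
  assumes A: "A \<in> rcfm_carrier" and B: "B \<in> rcfm_carrier"
  shows "(\<lambda>i j. \<Sum>l\<in>{l. A i l \<noteq> 0}. A i l * B l j) \<in> (rcfm_carrier :: (nat \<Rightarrow> nat \<Rightarrow> 'k::field) set)"
proof -
  have rA: "\<And>i. finite {l. A i l \<noteq> 0}" and cA: "\<And>j. finite {i. A i j \<noteq> 0}"
   and rB: "\<And>i. finite {l. B i l \<noteq> 0}" and cB: "\<And>j. finite {i. B i j \<noteq> 0}"
    using A B by (auto simp: rcfm_carrier_def)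
  have "finite {j. (\<Sum>l\<in>{l. A i l \<noteq> 0}. A i l * B l j) \<noteq> 0}" for i
  proof (rule finite_subset)
    show "{j. (\<Sum>l\<in>{l. A i l \<noteq> 0}. A i l * B l j) \<noteq> 0} \<subseteq> (\<Union>l\<in>{l. A i l \<noteq> 0}. {j. B l j \<noteq> 0})"
      using sum_nz_ex by fastforce
    show "finite (\<Union>l\<in>{l. A i l \<noteq> 0}. {j. B l j \<noteq> 0})" using rA rB by auto
  qed
  moreover have "finite {i. (\<Sum>l\<in>{l. A i l \<noteq> 0}. A i l * B l j) \<noteq> 0}" for j
  proof (rule finite_subset)
    show "{i. (\<Sum>l\<in>{l. A i l \<noteq> 0}. A i l * B l j) \<noteq> 0} \<subseteq> (\<Union>l\<in>{l. B l j \<noteq> 0}. {i. A i l \<noteq> 0})"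
      using sum_nz_ex by fastforce
    show "finite (\<Union>l\<in>{l. B l j \<noteq> 0}. {i. A i l \<noteq> 0})" using cA cB by auto
  qed
  ultimately show ?thesis by (simp add: rcfm_carrier_def)
qed

lemma rcfm_assoc:
  fixes A B C :: "nat \<Rightarrow> nat \<Rightarrow> 'k::field"
  assumes A: "A \<in> rcfm_carrier" and B: "B \<in> rcfm_carrier" and C: "C \<in> rcfm_carrier"
  shows "mult RCFM (mult RCFM A B) C = mult RCFM A (mult RCFM B C)"
proof -
  have rA: "\<And>i. finite {l. A i l \<noteq> 0}" and rB: "\<And>i. finite {l. B i l \<noteq> 0}"
    using A B by (auto simp: rcfm_carrier_def)
  show ?thesis
  proof (rule ext, rule ext)
    fix i j
    define S1 where "S1 = {l. A i l \<noteq> 0}"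
    define S2 where "S2 = (\<Union>m\<in>S1. {l. B m l \<noteq> 0})"
    have f1: "finite S1" using rA by (simp add: S1_def)
    have f2: "finite S2" using rA rB by (simp add: S2_def S1_def)
    have AB: "mult RCFM A B i l = (\<Sum>m\<in>S1. A i m * B m l)" for l
      by (simp add: rcfm_mult S1_def)
    have sub: "{l. mult RCFM A B i l \<noteq> 0} \<subseteq> S2"
      unfolding AB S2_def using sum_nz_ex by fastforce
    have "mult RCFM (mult RCFM A B) C i j = (\<Sum>l\<in>S2. mult RCFM A B i l * C l j)"
      unfolding rcfm_mult[of "mult RCFM A B"] by (rule mult_eq_sup[where A="mult RCFM A B" and i=i, OF f2 sub])
    also have "\<dots> = (\<Sum>l\<in>S2. \<Sum>m\<in>S1. A i m * B m l * C l j)"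
      by (simp add: AB sum_distrib_right)
    also have "\<dots> = (\<Sum>m\<in>S1. \<Sum>l\<in>S2. A i m * B m l * C l j)" by (rule sum.swap)
    also have "\<dots> = (\<Sum>m\<in>S1. A i m * (\<Sum>l\<in>S2. B m l * C l j))"
      by (simp add: sum_distrib_left mult.assoc)
    also have "\<dots> = (\<Sum>m\<in>S1. A i m * mult RCFM B C m j)"
    proof (rule sum.cong[OF refl])
      fix m assume "m \<in> S1"
      then have "{l. B m l \<noteq> 0} \<subseteq> S2" by (auto simp: S2_def)
      then show "A i m * (\<Sum>l\<in>S2. B m l * C l j) = A i m * mult RCFM B C m j"
        by (simp add: rcfm_mult mult_eq_sup[OF f2])
    qed
    also have "\<dots> = mult RCFM A (mult RCFM B C) i j" by (simp add: rcfm_mult S1_def)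
    finally show "mult RCFM (mult RCFM A B) C i j = mult RCFM A (mult RCFM B C) i j" .
  qed
qed

lemma ring_RCFM: "ring (RCFM :: (nat \<Rightarrow> nat \<Rightarrow> 'k::field) ring)"
proof (rule ringI)
  show "abelian_group (RCFM :: (nat \<Rightarrow> nat \<Rightarrow> 'k::field) ring)"
  proof (rule abelian_groupI)
    fix x y :: "nat \<Rightarrow> nat \<Rightarrow> 'k"
    assume "x \<in> carrier RCFM" "y \<in> carrier RCFM"
    then show "x \<oplus>\<^bsub>RCFM\<^esub> y \<in> carrier RCFM"
    proof -
      have "finite {j. x i j + y i j \<noteq> 0}" for i
        by (rule finite_subset[of _ "{j. x i j \<noteq> 0} \<union> {j. y i j \<noteq> 0}"])
           (use \<open>x \<in> carrier RCFM\<close> \<open>y \<in> carrier RCFM\<close> in \<open>auto simp: rcfm_carrier rcfm_carrier_def\<close>)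
      moreover have "finite {i. x i j + y i j \<noteq> 0}" for j
        by (rule finite_subset[of _ "{i. x i j \<noteq> 0} \<union> {i. y i j \<noteq> 0}"])
           (use \<open>x \<in> carrier RCFM\<close> \<open>y \<in> carrier RCFM\<close> in \<open>auto simp: rcfm_carrier rcfm_carrier_def\<close>)
      ultimately show ?thesis by (simp add: rcfm_carrier rcfm_add rcfm_carrier_def)
    qed
  next
    show "\<zero>\<^bsub>RCFM\<^esub> \<in> carrier (RCFM :: (nat \<Rightarrow> nat \<Rightarrow> 'k::field) ring)"
      by (simp add: rcfm_carrier rcfm_zero rcfm_carrier_def)
  next
    fix x y z :: "nat \<Rightarrow> nat \<Rightarrow> 'k"
    show "x \<oplus>\<^bsub>RCFM\<^esub> y \<oplus>\<^bsub>RCFM\<^esub> z = x \<oplus>\<^bsub>RCFM\<^esub> (y \<oplus>\<^bsub>RCFM\<^esub> z)"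
      by (simp add: rcfm_add add.assoc)
    show "x \<oplus>\<^bsub>RCFM\<^esub> y = y \<oplus>\<^bsub>RCFM\<^esub> x" by (simp add: rcfm_add add.commute)
    show "\<zero>\<^bsub>RCFM\<^esub> \<oplus>\<^bsub>RCFM\<^esub> x = x" by (simp add: rcfm_add rcfm_zero)
  next
    fix x :: "nat \<Rightarrow> nat \<Rightarrow> 'k" assume "x \<in> carrier RCFM"
    then show "\<exists>y\<in>carrier RCFM. y \<oplus>\<^bsub>RCFM\<^esub> x = \<zero>\<^bsub>RCFM\<^esub>"
      by (intro bexI[of _ "\<lambda>i j. - x i j"]) (auto simp: rcfm_add rcfm_zero rcfm_carrier rcfm_carrier_def)
  qed
next
  show "monoid (RCFM :: (nat \<Rightarrow> nat \<Rightarrow> 'k::field) ring)"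
  proof (rule monoidI)
    fix x y z :: "nat \<Rightarrow> nat \<Rightarrow> 'k"
    assume x: "x \<in> carrier RCFM" and y: "y \<in> carrier RCFM" and z: "z \<in> carrier RCFM"
    show "x \<otimes>\<^bsub>RCFM\<^esub> y \<in> carrier RCFM"
      using rcfm_mult_closed x y by (simp add: rcfm_mult rcfm_carrier)
    show "x \<otimes>\<^bsub>RCFM\<^esub> y \<otimes>\<^bsub>RCFM\<^esub> z = x \<otimes>\<^bsub>RCFM\<^esub> (y \<otimes>\<^bsub>RCFM\<^esub> z)"
      using rcfm_assoc x y z by (simp add: rcfm_carrier)
  next
    show "\<one>\<^bsub>RCFM\<^esub> \<in> carrier (RCFM :: (nat \<Rightarrow> nat \<Rightarrow> 'k::field) ring)"
      by (simp add: rcfm_one rcfm_carrier rcfm_carrier_def)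
  next
    fix x :: "nat \<Rightarrow> nat \<Rightarrow> 'k" assume x: "x \<in> carrier RCFM"
    have e: "{l. (if i = l then 1 else 0) \<noteq> (0::'k)} = {i}" for i by auto
    show "\<one>\<^bsub>RCFM\<^esub> \<otimes>\<^bsub>RCFM\<^esub> x = x" by (simp add: rcfm_mult rcfm_one e)
    have "(\<Sum>l\<in>{l. x i l \<noteq> 0}. x i l * (if l = j then 1 else 0)) = x i j" for i j
      using x by (auto simp: rcfm_carrier rcfm_carrier_def if_distrib sum.delta cong: if_cong)
    then show "x \<otimes>\<^bsub>RCFM\<^esub> \<one>\<^bsub>RCFM\<^esub> = x" by (simp add: rcfm_mult rcfm_one)
  qed
next
  fix x y z :: "nat \<Rightarrow> nat \<Rightarrow> 'k"
  assume x: "x \<in> carrier RCFM" and y: "y \<in> carrier RCFM" and z: "z \<in> carrier RCFM"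
  have rx: "\<And>i. finite {l. x i l \<noteq> 0}" and ry: "\<And>i. finite {l. y i l \<noteq> 0}"
    and rz: "\<And>i. finite {l. z i l \<noteq> 0}"
    using x y z by (auto simp: rcfm_carrier rcfm_carrier_def)
  show "(x \<oplus>\<^bsub>RCFM\<^esub> y) \<otimes>\<^bsub>RCFM\<^esub> z = x \<otimes>\<^bsub>RCFM\<^esub> z \<oplus>\<^bsub>RCFM\<^esub> y \<otimes>\<^bsub>RCFM\<^esub> z"
  proof (rule ext, rule ext)
    fix i j
    let ?S = "{l. x i l \<noteq> 0} \<union> {l. y i l \<noteq> 0}"
    have f: "finite ?S" using rx ry by auto
    show "((x \<oplus>\<^bsub>RCFM\<^esub> y) \<otimes>\<^bsub>RCFM\<^esub> z) i j = (x \<otimes>\<^bsub>RCFM\<^esub> z \<oplus>\<^bsub>RCFM\<^esub> y \<otimes>\<^bsub>RCFM\<^esub> z) i j"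
      unfolding rcfm_mult rcfm_add
      by (subst (1 2 3) mult_eq_sup[OF f]) (auto simp: distrib_right sum.distrib)
  qed
  show "z \<otimes>\<^bsub>RCFM\<^esub> (x \<oplus>\<^bsub>RCFM\<^esub> y) = z \<otimes>\<^bsub>RCFM\<^esub> x \<oplus>\<^bsub>RCFM\<^esub> z \<otimes>\<^bsub>RCFM\<^esub> y"
    by (simp add: rcfm_mult rcfm_add distrib_left sum.distrib)
qed


primrec lsum :: "('a, 'm) ring_scheme \<Rightarrow> (nat \<Rightarrow> 'a) \<Rightarrow> nat \<Rightarrow> 'a" where
  "lsum M f 0 = \<zero>\<^bsub>M\<^esub>"
| "lsum M f (Suc n) = lsum M f n \<oplus>\<^bsub>M\<^esub> f n"

lemma (in abelian_group) lsum_closed: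
  "(\<And>j. j < n \<Longrightarrow> f j \<in> carrier G) \<Longrightarrow> lsum G f n \<in> carrier G"
  by (induction n) auto

lemma (in abelian_group) lsum_cong:
  "(\<And>j. j < n \<Longrightarrow> f j = g j) \<Longrightarrow> lsum G f n = lsum G g n"
  by (induction n) auto

lemma (in abelian_group) lsum_add:
  assumes "\<And>j. j < n \<Longrightarrow> f j \<in> carrier G" "\<And>j. j < n \<Longrightarrow> g j \<in> carrier G"
  shows "lsum G (\<lambda>j. f j \<oplus> g j) n = lsum G f n \<oplus> lsum G g n"
  using assms
proof (induction n)
  case 0 then show ?case by simp
next
  case (Suc n)
  have c: "lsum G f n \<in> carrier G" "lsum G g n \<in> carrier G" "f n \<in> carrier G" "g n \<in> carrier G"
    using Suc.prems by (auto intro!: lsum_closed)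
  show ?case using Suc c by (simp add: a_ac)
qed

lemma additive_zero:
  assumes "abelian_group M" "abelian_group N" "h \<in> carrier M \<rightarrow> carrier N"
    "\<And>x y. x \<in> carrier M \<Longrightarrow> y \<in> carrier M \<Longrightarrow> h (x \<oplus>\<^bsub>M\<^esub> y) = h x \<oplus>\<^bsub>N\<^esub> h y"
  shows "h \<zero>\<^bsub>M\<^esub> = \<zero>\<^bsub>N\<^esub>"
proof -
  interpret M: abelian_group M by fact
  interpret N: abelian_group N by fact
  have z: "h \<zero>\<^bsub>M\<^esub> \<in> carrier N" using assms(3) by auto
  have "h \<zero>\<^bsub>M\<^esub> \<oplus>\<^bsub>N\<^esub> h \<zero>\<^bsub>M\<^esub> = h \<zero>\<^bsub>M\<^esub> \<oplus>\<^bsub>N\<^esub> \<zero>\<^bsub>N\<^esub>"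
    using assms(4)[of "\<zero>\<^bsub>M\<^esub>" "\<zero>\<^bsub>M\<^esub>"] z by simp
  then show ?thesis using z by simp
qed

lemma additive_inv:
  assumes "abelian_group M" "abelian_group N" "h \<in> carrier M \<rightarrow> carrier N"
    "\<And>x y. x \<in> carrier M \<Longrightarrow> y \<in> carrier M \<Longrightarrow> h (x \<oplus>\<^bsub>M\<^esub> y) = h x \<oplus>\<^bsub>N\<^esub> h y"
    "x \<in> carrier M"
  shows "h (\<ominus>\<^bsub>M\<^esub> x) = \<ominus>\<^bsub>N\<^esub> h x"
proof -
  interpret M: abelian_group M by fact
  interpret N: abelian_group N by fact
  have "h (\<ominus>\<^bsub>M\<^esub> x) \<oplus>\<^bsub>N\<^esub> h x = \<zero>\<^bsub>N\<^esub>"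
    using assms(4)[of "\<ominus>\<^bsub>M\<^esub> x" x] additive_zero[OF assms(1-4)] assms(5) by (simp add: M.l_neg)
  then show ?thesis using assms(3,5) by (auto intro: N.minus_equality[symmetric])
qed

lemma additive_lsum:
  assumes "abelian_group M" "abelian_group N" "h \<in> carrier M \<rightarrow> carrier N"
    "\<And>x y. x \<in> carrier M \<Longrightarrow> y \<in> carrier M \<Longrightarrow> h (x \<oplus>\<^bsub>M\<^esub> y) = h x \<oplus>\<^bsub>N\<^esub> h y"
    "\<And>j. j < n \<Longrightarrow> f j \<in> carrier M"
  shows "h (lsum M f n) = lsum N (\<lambda>j. h (f j)) n"
  using assms(5)
proof (induction n)
  case 0 then show ?case using additive_zero[OF assms(1-4)] by simp
next
  case (Suc n)
  then show ?case using assms(4)[of "lsum M f n" "f n"] abelian_group.lsum_closed[OF assms(1)] by simp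
qed

lemma rmod_group: "right_module R M \<Longrightarrow> abelian_group M"
  by (simp add: right_module_def)

lemma rsmult_zero:
  assumes "right_module R M" "r \<in> carrier R"
  shows "rsmult M \<zero>\<^bsub>M\<^esub> r = \<zero>\<^bsub>M\<^esub>"
proof -
  interpret M: abelian_group M using assms by (simp add: right_module_def)
  have c: "rsmult M \<zero>\<^bsub>M\<^esub> r \<in> carrier M" using assms by (simp add: right_module_def)
  have "rsmult M \<zero>\<^bsub>M\<^esub> r \<oplus>\<^bsub>M\<^esub> rsmult M \<zero>\<^bsub>M\<^esub> r = rsmult M \<zero>\<^bsub>M\<^esub> r \<oplus>\<^bsub>M\<^esub> \<zero>\<^bsub>M\<^esub>"
  proof -
    have "\<forall>x\<in>carrier M. \<forall>y\<in>carrier M. \<forall>r\<in>carrier R.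
        rsmult M (x \<oplus>\<^bsub>M\<^esub> y) r = rsmult M x r \<oplus>\<^bsub>M\<^esub> rsmult M y r"
      using assms(1) unfolding right_module_def by blast
    then have "rsmult M (\<zero>\<^bsub>M\<^esub> \<oplus>\<^bsub>M\<^esub> \<zero>\<^bsub>M\<^esub>) r = rsmult M \<zero>\<^bsub>M\<^esub> r \<oplus>\<^bsub>M\<^esub> rsmult M \<zero>\<^bsub>M\<^esub> r"
      using assms(2) by blast
    then show ?thesis using c by simp
  qed
  then show ?thesis using c by simp
qed

lemma lsum_rsmult:
  assumes "right_module R M" "r \<in> carrier R" "\<And>j. j < n \<Longrightarrow> f j \<in> carrier M"
  shows "rsmult M (lsum M f n) r = lsum M (\<lambda>j. rsmult M (f j) r) n"
  using assms(3)
proof (induction n)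
  case 0 then show ?case using rsmult_zero[OF assms(1,2)] by simp
next
  case (Suc n)
  have "lsum M f n \<in> carrier M"
    using Suc.prems abelian_group.lsum_closed[OF rmod_group[OF assms(1)]] by simp
  then show ?case using Suc assms(1,2) unfolding right_module_def by simp
qed

lemma dual_basis_projective:
  fixes R :: "('r, 'c) ring_scheme" and P :: "('p, 'r, 'd) rmodule_scheme"
  assumes R: "ring R" and P: "right_module R P"
    and p: "\<And>j. j < m \<Longrightarrow> p j \<in> carrier P"
    and \<phi>c: "\<And>j x. j < m \<Longrightarrow> x \<in> carrier P \<Longrightarrow> \<phi> j x \<in> carrier R"
    and \<phi>a: "\<And>j x y. j < m \<Longrightarrow> x \<in> carrier P \<Longrightarrow> y \<in> carrier P \<Longrightarrow>
               \<phi> j (x \<oplus>\<^bsub>P\<^esub> y) = \<phi> j x \<oplus>\<^bsub>R\<^esub> \<phi> j y"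
    and \<phi>s: "\<And>j x r. j < m \<Longrightarrow> x \<in> carrier P \<Longrightarrow> r \<in> carrier R \<Longrightarrow>
               \<phi> j (rsmult P x r) = \<phi> j x \<otimes>\<^bsub>R\<^esub> r"
    and dec: "\<And>x. x \<in> carrier P \<Longrightarrow> x = lsum P (\<lambda>j. rsmult P (p j) (\<phi> j x)) m"
  shows "projective R P (TYPE('b))"
  unfolding projective_def
proof (intro allI impI)
  fix A B :: "('b, 'r) rmodule" and g f
  assume H: "right_module R A \<and> right_module R B \<and> g \<in> rhom R A B \<and> g ` carrier A = carrier B \<and> f \<in> rhom R P B"
  then have A: "right_module R A" and B: "right_module R B" and g: "g \<in> rhom R A B"
    and gs: "g ` carrier A = carrier B" and f: "f \<in> rhom R P B" by auto
  interpret R: ring R by fact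
  interpret A: abelian_group A using A by (simp add: right_module_def)
  interpret B: abelian_group B using B by (simp add: right_module_def)
  have Pg: "abelian_group P" using P by (simp add: right_module_def)
  have fp: "f (p j) \<in> carrier B" if "j < m" for j using f p that by (auto simp: rhom_def)
  have "\<exists>a. a \<in> carrier A \<and> g a = f (p j)" if "j < m" for j
    using fp[OF that] gs by (metis imageE)
  then obtain a where a: "\<And>j. j < m \<Longrightarrow> a j \<in> carrier A \<and> g (a j) = f (p j)" by metis
  define h where "h x = lsum A (\<lambda>j. rsmult A (a j) (\<phi> j x)) m" for x
  have smA: "\<And>x r. x \<in> carrier A \<Longrightarrow> r \<in> carrier R \<Longrightarrow> rsmult A x r \<in> carrier A"
    using A by (simp add: right_module_def)
  have hc: "h x \<in> carrier A" if "x \<in> carrier P" for x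
    unfolding h_def by (rule A.lsum_closed) (use a \<phi>c smA that in auto)
  have "h \<in> rhom R P A"
    unfolding rhom_def
  proof (intro CollectI conjI ballI)
    show "h \<in> carrier P \<rightarrow> carrier A" using hc by auto
  next
    fix x y assume x: "x \<in> carrier P" and y: "y \<in> carrier P"
    have "h (x \<oplus>\<^bsub>P\<^esub> y) = lsum A (\<lambda>j. rsmult A (a j) (\<phi> j x) \<oplus>\<^bsub>A\<^esub> rsmult A (a j) (\<phi> j y)) m"
      unfolding h_def
      by (rule A.lsum_cong) (use a x y \<phi>a \<phi>c A in \<open>simp add: right_module_def\<close>)
    also have "\<dots> = h x \<oplus>\<^bsub>A\<^esub> h y"
      unfolding h_def by (rule A.lsum_add) (use a x y \<phi>c smA in auto)
    finally show "h (x \<oplus>\<^bsub>P\<^esub> y) = h x \<oplus>\<^bsub>A\<^esub> h y" .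
  next
    fix x r assume x: "x \<in> carrier P" and r: "r \<in> carrier R"
    have "h (rsmult P x r) = lsum A (\<lambda>j. rsmult A (rsmult A (a j) (\<phi> j x)) r) m"
      unfolding h_def
      by (rule A.lsum_cong) (use a x r \<phi>s \<phi>c A in \<open>simp add: right_module_def\<close>)
    also have "\<dots> = rsmult A (h x) r"
      unfolding h_def by (rule lsum_rsmult[symmetric, OF A r]) (use a x \<phi>c smA in auto)
    finally show "h (rsmult P x r) = rsmult A (h x) r" .
  qed
  moreover have "g (h x) = f x" if x: "x \<in> carrier P" for x
  proof -
    have gA: "g \<in> carrier A \<rightarrow> carrier B" and gadd: "\<And>x y. x \<in> carrier A \<Longrightarrow> y \<in> carrier A \<Longrightarrow> g (x \<oplus>\<^bsub>A\<^esub> y) = g x \<oplus>\<^bsub>B\<^esub> g y"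
      and gs: "\<And>x r. x \<in> carrier A \<Longrightarrow> r \<in> carrier R \<Longrightarrow> g (rsmult A x r) = rsmult B (g x) r"
      using g by (auto simp: rhom_def)
    have fB: "f \<in> carrier P \<rightarrow> carrier B" and fadd: "\<And>x y. x \<in> carrier P \<Longrightarrow> y \<in> carrier P \<Longrightarrow> f (x \<oplus>\<^bsub>P\<^esub> y) = f x \<oplus>\<^bsub>B\<^esub> f y"
      and fs: "\<And>x r. x \<in> carrier P \<Longrightarrow> r \<in> carrier R \<Longrightarrow> f (rsmult P x r) = rsmult B (f x) r"
      using f by (auto simp: rhom_def)
    have smP: "\<And>x r. x \<in> carrier P \<Longrightarrow> r \<in> carrier R \<Longrightarrow> rsmult P x r \<in> carrier P"
      using P by (simp add: right_module_def)
    have "g (h x) = lsum B (\<lambda>j. g (rsmult A (a j) (\<phi> j x))) m"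
      unfolding h_def
      by (rule additive_lsum[OF rmod_group[OF A] rmod_group[OF B] gA gadd]) (use a x \<phi>c smA in auto)
    also have "\<dots> = lsum B (\<lambda>j. f (rsmult P (p j) (\<phi> j x))) m"
      by (rule B.lsum_cong) (use a x \<phi>c gs fs p in auto)
    also have "\<dots> = f (lsum P (\<lambda>j. rsmult P (p j) (\<phi> j x)) m)"
      by (rule additive_lsum[symmetric, OF Pg rmod_group[OF B] fB fadd]) (use p x \<phi>c smP in auto)
    also have "\<dots> = f x" using dec[OF x] by simp
    finally show ?thesis .
  qed
  ultimately show "\<exists>h\<in>rhom R P A. \<forall>x\<in>carrier P. g (h x) = f x" by blast
qed


definition unitv :: "('r, 'c) ring_scheme \<Rightarrow> nat \<Rightarrow> nat \<Rightarrow> 'r" where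
  "unitv R j = (\<lambda>i. if i = j then \<one>\<^bsub>R\<^esub> else \<zero>\<^bsub>R\<^esub>)"

definition fixmod :: "('r, 'c) ring_scheme \<Rightarrow> nat \<Rightarrow> ((nat \<Rightarrow> 'r) \<Rightarrow> (nat \<Rightarrow> 'r)) \<Rightarrow> (nat \<Rightarrow> 'r, 'r) rmodule" where
  "fixmod R m E = (free_rmod R m)\<lparr>carrier := {v \<in> carrier (free_rmod R m). E v = v}\<rparr>"

lemma free_simps:
  "carrier (free_rmod R n) = {v. (\<forall>i<n. v i \<in> carrier R) \<and> (\<forall>i\<ge>n. v i = \<zero>\<^bsub>R\<^esub>)}"
  "\<zero>\<^bsub>free_rmod R n\<^esub> = (\<lambda>i. \<zero>\<^bsub>R\<^esub>)"
  "v \<oplus>\<^bsub>free_rmod R n\<^esub> w = (\<lambda>i. if i < n then v i \<oplus>\<^bsub>R\<^esub> w i else \<zero>\<^bsub>R\<^esub>)"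
  "rsmult (free_rmod R n) v r = (\<lambda>i. if i < n then v i \<otimes>\<^bsub>R\<^esub> r else \<zero>\<^bsub>R\<^esub>)"
  by (simp_all add: free_rmod_def)

lemma free_right_module:
  assumes "ring R" shows "right_module R (free_rmod R n)"
proof -
  interpret R: ring R by fact
  have ag: "abelian_group (free_rmod R n)"
  proof (rule abelian_groupI)
    fix x y assume "x \<in> carrier (free_rmod R n)" "y \<in> carrier (free_rmod R n)"
    then show "x \<oplus>\<^bsub>free_rmod R n\<^esub> y \<in> carrier (free_rmod R n)" by (simp add: free_simps)
  next
    show "\<zero>\<^bsub>free_rmod R n\<^esub> \<in> carrier (free_rmod R n)" by (simp add: free_simps)
  next
    fix x y z assume "x \<in> carrier (free_rmod R n)" "y \<in> carrier (free_rmod R n)" "z \<in> carrier (free_rmod R n)"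
    then show "x \<oplus>\<^bsub>free_rmod R n\<^esub> y \<oplus>\<^bsub>free_rmod R n\<^esub> z = x \<oplus>\<^bsub>free_rmod R n\<^esub> (y \<oplus>\<^bsub>free_rmod R n\<^esub> z)"
      by (auto simp: free_simps R.a_assoc)
  next
    fix x y assume "x \<in> carrier (free_rmod R n)" "y \<in> carrier (free_rmod R n)"
    then show "x \<oplus>\<^bsub>free_rmod R n\<^esub> y = y \<oplus>\<^bsub>free_rmod R n\<^esub> x"
      by (auto simp: free_simps R.a_comm)
  next
    fix x assume "x \<in> carrier (free_rmod R n)"
    then show "\<zero>\<^bsub>free_rmod R n\<^esub> \<oplus>\<^bsub>free_rmod R n\<^esub> x = x"
      by (auto simp: free_simps fun_eq_iff)
  next
    fix x assume x: "x \<in> carrier (free_rmod R n)"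
    show "\<exists>y\<in>carrier (free_rmod R n). y \<oplus>\<^bsub>free_rmod R n\<^esub> x = \<zero>\<^bsub>free_rmod R n\<^esub>"
      by (rule bexI[of _ "\<lambda>i. if i < n then \<ominus>\<^bsub>R\<^esub> x i else \<zero>\<^bsub>R\<^esub>"])
         (use x in \<open>auto simp: free_simps fun_eq_iff R.l_neg\<close>)
  qed
  show ?thesis unfolding right_module_def
  proof (intro conjI ballI ag)
    fix x r assume "x \<in> carrier (free_rmod R n)" "r \<in> carrier R"
    then show "rsmult (free_rmod R n) x r \<in> carrier (free_rmod R n)" by (simp add: free_simps)
  next
    fix x y r assume "x \<in> carrier (free_rmod R n)" "y \<in> carrier (free_rmod R n)" "r \<in> carrier R"
    then show "rsmult (free_rmod R n) (x \<oplus>\<^bsub>free_rmod R n\<^esub> y) r =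
       rsmult (free_rmod R n) x r \<oplus>\<^bsub>free_rmod R n\<^esub> rsmult (free_rmod R n) y r"
      by (auto simp: free_simps fun_eq_iff R.l_distr)
  next
    fix x r s assume "x \<in> carrier (free_rmod R n)" "r \<in> carrier R" "s \<in> carrier R"
    then show "rsmult (free_rmod R n) x (r \<oplus>\<^bsub>R\<^esub> s) =
       rsmult (free_rmod R n) x r \<oplus>\<^bsub>free_rmod R n\<^esub> rsmult (free_rmod R n) x s"
      by (auto simp: free_simps fun_eq_iff R.r_distr)
  next
    fix x r s assume "x \<in> carrier (free_rmod R n)" "r \<in> carrier R" "s \<in> carrier R"
    then show "rsmult (free_rmod R n) x (r \<otimes>\<^bsub>R\<^esub> s) = rsmult (free_rmod R n) (rsmult (free_rmod R n) x r) s"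
      by (auto simp: free_simps fun_eq_iff R.m_assoc)
  next
    fix x assume "x \<in> carrier (free_rmod R n)"
    then show "rsmult (free_rmod R n) x \<one>\<^bsub>R\<^esub> = x"
      by (auto simp: free_simps fun_eq_iff)
  qed
qed

lemma lsum_upd_carrier: "lsum (M\<lparr>carrier := C\<rparr>) f n = lsum M f n"
  by (induction n) simp_all

lemma lsum_free_apply:
  "lsum (free_rmod R m) f k i = (if i < m then lsum R (\<lambda>j. f j i) k else \<zero>\<^bsub>R\<^esub>)"
  by (induction k) (simp_all add: free_simps)

lemma (in ring) lsum_delta:
  assumes "a \<in> carrier R"
  shows "lsum R (\<lambda>j. if j = i then a else \<zero>) k = (if i < k then a else \<zero>)"
  using assms by (induction k) auto

lemma free_decomp:
  assumes R: "ring R" and x: "x \<in> carrier (free_rmod R m)"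
  shows "x = lsum (free_rmod R m) (\<lambda>j. rsmult (free_rmod R m) (unitv R j) (x j)) m"
proof (rule ext)
  interpret R: ring R by fact
  fix i
  show "x i = lsum (free_rmod R m) (\<lambda>j. rsmult (free_rmod R m) (unitv R j) (x j)) m i"
  proof (cases "i < m")
    case True
    have "lsum R (\<lambda>j. rsmult (free_rmod R m) (unitv R j) (x j) i) m = lsum R (\<lambda>j. if j = i then x i else \<zero>\<^bsub>R\<^esub>) m"
      by (rule R.lsum_cong) (use x True in \<open>auto simp: free_simps unitv_def\<close>)
    then show ?thesis using True x by (simp add: lsum_free_apply R.lsum_delta free_simps)
  next
    case False then show ?thesis using x by (simp add: lsum_free_apply free_simps)
  qed
qed

lemma unitv_carrier: "ring R \<Longrightarrow> j < m \<Longrightarrow> unitv R j \<in> carrier (free_rmod R m)"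
  by (auto simp: unitv_def free_simps ring.ring_simprules)

lemma fixmod_simps:
  "carrier (fixmod R m E) = {v \<in> carrier (free_rmod R m). E v = v}"
  "\<zero>\<^bsub>fixmod R m E\<^esub> = \<zero>\<^bsub>free_rmod R m\<^esub>"
  "add (fixmod R m E) = add (free_rmod R m)"
  "rsmult (fixmod R m E) = rsmult (free_rmod R m)"
  by (simp_all add: fixmod_def)

lemma fixmod_id: "fixmod R m (\<lambda>v. v) = free_rmod R m"
  by (simp add: fixmod_def free_rmod_def)

lemma fixmod_right_module:
  assumes R: "ring R" and E: "E \<in> rhom R (free_rmod R m) (free_rmod R m)"
  shows "right_module R (fixmod R m E)"
proof -
  have F: "right_module R (free_rmod R m)" by (rule free_right_module[OF R])
  interpret F: abelian_group "free_rmod R m" using F by (simp add: right_module_def)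
  have Ec: "E \<in> carrier (free_rmod R m) \<rightarrow> carrier (free_rmod R m)"
    and Ea: "\<And>x y. x \<in> carrier (free_rmod R m) \<Longrightarrow> y \<in> carrier (free_rmod R m) \<Longrightarrow>
       E (x \<oplus>\<^bsub>free_rmod R m\<^esub> y) = E x \<oplus>\<^bsub>free_rmod R m\<^esub> E y"
    and Es: "\<And>x r. x \<in> carrier (free_rmod R m) \<Longrightarrow> r \<in> carrier R \<Longrightarrow>
       E (rsmult (free_rmod R m) x r) = rsmult (free_rmod R m) (E x) r"
    using E by (auto simp: rhom_def)
  have E0: "E \<zero>\<^bsub>free_rmod R m\<^esub> = \<zero>\<^bsub>free_rmod R m\<^esub>"
    by (rule additive_zero[where M="free_rmod R m" and N="free_rmod R m"]) (use Ec Ea F.abelian_group_axioms in auto)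
  have Ei: "E (\<ominus>\<^bsub>free_rmod R m\<^esub> x) = \<ominus>\<^bsub>free_rmod R m\<^esub> E x" if "x \<in> carrier (free_rmod R m)" for x
    by (rule additive_inv[where M="free_rmod R m" and N="free_rmod R m"]) (use Ec Ea F.abelian_group_axioms that in auto)
  have ag: "abelian_group (fixmod R m E)"
  proof (rule abelian_groupI)
    fix x y assume "x \<in> carrier (fixmod R m E)" "y \<in> carrier (fixmod R m E)"
    then show "x \<oplus>\<^bsub>fixmod R m E\<^esub> y \<in> carrier (fixmod R m E)"
      by (simp add: fixmod_simps Ea)
  next
    show "\<zero>\<^bsub>fixmod R m E\<^esub> \<in> carrier (fixmod R m E)" by (simp add: fixmod_simps E0)
  next
    fix x y z assume "x \<in> carrier (fixmod R m E)" "y \<in> carrier (fixmod R m E)" "z \<in> carrier (fixmod R m E)"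
    then show "x \<oplus>\<^bsub>fixmod R m E\<^esub> y \<oplus>\<^bsub>fixmod R m E\<^esub> z = x \<oplus>\<^bsub>fixmod R m E\<^esub> (y \<oplus>\<^bsub>fixmod R m E\<^esub> z)"
      by (simp add: fixmod_simps F.a_assoc)
  next
    fix x y assume "x \<in> carrier (fixmod R m E)" "y \<in> carrier (fixmod R m E)"
    then show "x \<oplus>\<^bsub>fixmod R m E\<^esub> y = y \<oplus>\<^bsub>fixmod R m E\<^esub> x"
      by (simp add: fixmod_simps F.a_comm)
  next
    fix x assume "x \<in> carrier (fixmod R m E)"
    then show "\<zero>\<^bsub>fixmod R m E\<^esub> \<oplus>\<^bsub>fixmod R m E\<^esub> x = x"
      by (simp add: fixmod_simps)
  next
    fix x assume x: "x \<in> carrier (fixmod R m E)"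
    show "\<exists>y\<in>carrier (fixmod R m E). y \<oplus>\<^bsub>fixmod R m E\<^esub> x = \<zero>\<^bsub>fixmod R m E\<^esub>"
      by (rule bexI[of _ "\<ominus>\<^bsub>free_rmod R m\<^esub> x"]) (use x Ei in \<open>auto simp: fixmod_simps F.l_neg\<close>)
  qed
  show ?thesis using F unfolding right_module_def fixmod_simps
    by (intro conjI ag) (auto simp: Es)
qed

lemma fixmod_projective:
  assumes R: "ring R" and E: "E \<in> rhom R (free_rmod R m) (free_rmod R m)"
    and idem: "\<And>v. v \<in> carrier (free_rmod R m) \<Longrightarrow> E (E v) = E v"
  shows "projective R (fixmod R m E) TYPE('b)"
proof -
  interpret R: ring R by fact
  have F: "right_module R (free_rmod R m)" by (rule free_right_module[OF R])
  interpret F: abelian_group "free_rmod R m" using F by (simp add: right_module_def)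
  have Ec: "E \<in> carrier (free_rmod R m) \<rightarrow> carrier (free_rmod R m)"
    and Ea: "\<And>x y. x \<in> carrier (free_rmod R m) \<Longrightarrow> y \<in> carrier (free_rmod R m) \<Longrightarrow>
       E (x \<oplus>\<^bsub>free_rmod R m\<^esub> y) = E x \<oplus>\<^bsub>free_rmod R m\<^esub> E y"
    and Es: "\<And>x r. x \<in> carrier (free_rmod R m) \<Longrightarrow> r \<in> carrier R \<Longrightarrow>
       E (rsmult (free_rmod R m) x r) = rsmult (free_rmod R m) (E x) r"
    using E by (auto simp: rhom_def)
  have smF: "\<And>x r. x \<in> carrier (free_rmod R m) \<Longrightarrow> r \<in> carrier R \<Longrightarrow> rsmult (free_rmod R m) x r \<in> carrier (free_rmod R m)"
    using F by (simp add: right_module_def)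
  show ?thesis
  proof (rule dual_basis_projective[OF R fixmod_right_module[OF R E], where p="\<lambda>j. E (unitv R j)" and \<phi>="\<lambda>j x. x j" and m=m])
    fix j assume j: "j < m"
    show "E (unitv R j) \<in> carrier (fixmod R m E)"
      using unitv_carrier[OF R j] Ec idem by (auto simp: fixmod_simps)
  next
    fix j x assume "j < m" "x \<in> carrier (fixmod R m E)"
    then show "x j \<in> carrier R" by (simp add: fixmod_simps free_simps)
  next
    fix j x y assume "j < m" "x \<in> carrier (fixmod R m E)" "y \<in> carrier (fixmod R m E)"
    then show "(x \<oplus>\<^bsub>fixmod R m E\<^esub> y) j = x j \<oplus>\<^bsub>R\<^esub> y j" by (simp add: fixmod_simps free_simps)
  next
    fix j x r assume "j < m" "x \<in> carrier (fixmod R m E)" "r \<in> carrier R"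
    then show "rsmult (fixmod R m E) x r j = x j \<otimes>\<^bsub>R\<^esub> r" by (simp add: fixmod_simps free_simps)
  next
    fix x assume x: "x \<in> carrier (fixmod R m E)"
    then have xc: "x \<in> carrier (free_rmod R m)" and xE: "E x = x" by (auto simp: fixmod_simps)
    have xj: "\<And>j. j < m \<Longrightarrow> x j \<in> carrier R" using xc by (simp add: free_simps)
    have "x = E (lsum (free_rmod R m) (\<lambda>j. rsmult (free_rmod R m) (unitv R j) (x j)) m)"
      using free_decomp[OF R xc] xE by simp
    also have "\<dots> = lsum (free_rmod R m) (\<lambda>j. E (rsmult (free_rmod R m) (unitv R j) (x j))) m"
      by (rule additive_lsum[where M="free_rmod R m" and N="free_rmod R m"])
         (use Ec Ea F.abelian_group_axioms smF unitv_carrier[OF R] xj in auto)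
    also have "\<dots> = lsum (free_rmod R m) (\<lambda>j. rsmult (free_rmod R m) (E (unitv R j)) (x j)) m"
      by (rule F.lsum_cong) (use Es unitv_carrier[OF R] xj in auto)
    also have "\<dots> = lsum (fixmod R m E) (\<lambda>j. rsmult (fixmod R m E) (E (unitv R j)) (x j)) m"
      by (simp add: fixmod_def lsum_upd_carrier)
    finally show "x = lsum (fixmod R m E) (\<lambda>j. rsmult (fixmod R m E) (E (unitv R j)) (x j)) m" .
  qed
qed


definition fin :: "('i \<Rightarrow> 'k::zero) \<Rightarrow> bool" where "fin x \<longleftrightarrow> finite {t. x t \<noteq> 0}"
definition ip :: "('i \<Rightarrow> 'k::comm_ring) \<Rightarrow> ('i \<Rightarrow> 'k) \<Rightarrow> 'k" where
  "ip x y = (\<Sum>t\<in>{t. x t \<noteq> 0}. x t * y t)"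
definition delta :: "'i \<Rightarrow> 'i \<Rightarrow> 'k::field" where "delta s = (\<lambda>t. if t = s then 1 else 0)"

lemma fin_zero[simp]: "fin (\<lambda>t. 0)" by (simp add: fin_def)
lemma fin_add: "fin x \<Longrightarrow> fin y \<Longrightarrow> fin (\<lambda>t. x t + (y t :: 'k::monoid_add))"
  unfolding fin_def by (rule finite_subset[of _ "{t. x t \<noteq> 0} \<union> {t. y t \<noteq> 0}"]) auto
lemma fin_diff: "fin x \<Longrightarrow> fin y \<Longrightarrow> fin (\<lambda>t. x t - (y t :: 'k::ab_group_add))"
  unfolding fin_def by (rule finite_subset[of _ "{t. x t \<noteq> 0} \<union> {t. y t \<noteq> 0}"]) auto
lemma fin_smult: "fin x \<Longrightarrow> fin (\<lambda>t. c * (x t :: 'k::field))"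
  unfolding fin_def by (rule finite_subset[of _ "{t. x t \<noteq> 0}"]) auto
lemma fin_delta[simp]: "fin (delta s :: 'i \<Rightarrow> 'k::field)"
  unfolding fin_def delta_def by (rule finite_subset[of _ "{s}"]) auto
lemma fin_sum: "(\<And>r. r < (n::nat) \<Longrightarrow> fin (f r)) \<Longrightarrow> fin (\<lambda>t. \<Sum>r<n. f r t :: 'k::comm_monoid_add)"
proof (induction n)
  case 0 then show ?case by (simp add: fin_def)
next
  case (Suc n)
  have "fin (\<lambda>t. (\<Sum>r<n. f r t) + f n t)"
    by (rule fin_add) (use Suc in auto)
  then show ?case by simp
qed

lemma ip_expand:
  assumes "fin x" "finite S" "\<And>t. t \<notin> S \<Longrightarrow> x t * y t = 0"
  shows "ip x y = (\<Sum>t\<in>S. x t * y t)"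
proof -
  have f: "finite {t. x t \<noteq> 0}" using assms(1) by (simp add: fin_def)
  have "ip x y = (\<Sum>t\<in>{t. x t \<noteq> 0} \<union> S. x t * y t)"
    unfolding ip_def by (rule sum.mono_neutral_left) (use f assms(2) in auto)
  also have "\<dots> = (\<Sum>t\<in>S. x t * y t)"
    by (rule sum.mono_neutral_right) (use f assms in auto)
  finally show ?thesis .
qed

lemma ip_expand_l: "fin x \<Longrightarrow> finite S \<Longrightarrow> {t. x t \<noteq> 0} \<subseteq> S \<Longrightarrow> ip x y = (\<Sum>t\<in>S. x t * y t)"
proof (rule ip_expand)
  fix t assume "{t. x t \<noteq> 0} \<subseteq> S" "t \<notin> S"
  then have "x t = 0" by blast
  then show "x t * y t = 0" by simp
qed
lemma ip_expand_r: "fin x \<Longrightarrow> finite S \<Longrightarrow> {t. y t \<noteq> 0} \<subseteq> S \<Longrightarrow> ip x y = (\<Sum>t\<in>S. x t * y t)"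
proof (rule ip_expand)
  fix t assume "{t. y t \<noteq> 0} \<subseteq> S" "t \<notin> S"
  then have "y t = 0" by blast
  then show "x t * y t = 0" by simp
qed

lemma fin_finite: "fin x \<Longrightarrow> finite {t. x t \<noteq> 0}" by (simp add: fin_def)

lemma ip_comm: "fin x \<Longrightarrow> fin y \<Longrightarrow> ip x y = ip (y :: 'i \<Rightarrow> 'k::comm_ring) x"
proof -
  assume x: "fin x" and y: "fin y"
  let ?S = "{t. x t \<noteq> 0} \<union> {t. y t \<noteq> 0}"
  have f: "finite ?S" using x y by (simp add: fin_def)
  have "ip x y = (\<Sum>t\<in>?S. x t * y t)" by (rule ip_expand_l[OF x f]) auto
  also have "\<dots> = (\<Sum>t\<in>?S. y t * x t)" by (simp add: mult.commute)
  also have "\<dots> = ip y x" by (rule ip_expand_l[OF y f, symmetric]) auto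
  finally show ?thesis .
qed

lemma ip_add_left: "fin x \<Longrightarrow> fin y \<Longrightarrow> ip (\<lambda>t. x t + y t) z = ip x z + ip y (z :: 'i \<Rightarrow> 'k::comm_ring)"
proof -
  assume x: "fin x" and y: "fin y"
  let ?S = "{t. x t \<noteq> 0} \<union> {t. y t \<noteq> 0}"
  have f: "finite ?S" using x y by (simp add: fin_def)
  show ?thesis
  proof -
    have sub: "{t. x t + y t \<noteq> 0} \<subseteq> ?S" by auto
    show ?thesis
      using ip_expand_l[OF x f, of z] ip_expand_l[OF y f, of z] ip_expand_l[OF fin_add[OF x y] f sub, of z]
      by (simp add: distrib_right sum.distrib)
  qed
qed

lemma ip_diff_left: "fin x \<Longrightarrow> fin y \<Longrightarrow> ip (\<lambda>t. x t - y t) z = ip x z - ip y (z :: 'i \<Rightarrow> 'k::comm_ring)"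
proof -
  assume x: "fin x" and y: "fin y"
  let ?S = "{t. x t \<noteq> 0} \<union> {t. y t \<noteq> 0}"
  have f: "finite ?S" using x y by (simp add: fin_def)
  show ?thesis
  proof -
    have sub: "{t. x t - y t \<noteq> 0} \<subseteq> ?S" by auto
    show ?thesis
      using ip_expand_l[OF x f, of z] ip_expand_l[OF y f, of z] ip_expand_l[OF fin_diff[OF x y] f sub, of z]
      by (simp add: left_diff_distrib sum_subtractf)
  qed
qed

lemma ip_smult_left: "fin x \<Longrightarrow> ip (\<lambda>t. c * x t) y = c * ip x (y :: 'i \<Rightarrow> 'k::field)"
proof -
  assume x: "fin x"
  have f: "finite {t. x t \<noteq> 0}" using x by (simp add: fin_def)
  show ?thesis
  proof -
    have sub: "{t. c * x t \<noteq> 0} \<subseteq> {t. x t \<noteq> 0}" by auto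
    show ?thesis
      using ip_expand_l[OF x f, of y] ip_expand_l[OF fin_smult[OF x] f sub, of y]
      by (simp add: sum_distrib_left mult.assoc)
  qed
qed

lemma ip_add_right: "ip x (\<lambda>t. y t + z t) = ip x y + ip x (z :: 'i \<Rightarrow> 'k::comm_ring)"
  by (simp add: ip_def distrib_left sum.distrib)
lemma ip_diff_right: "ip x (\<lambda>t. y t - z t) = ip x y - ip x (z :: 'i \<Rightarrow> 'k::comm_ring)"
  by (simp add: ip_def right_diff_distrib sum_subtractf)
lemma ip_smult_right: "ip x (\<lambda>t. c * y t) = c * ip x (y :: 'i \<Rightarrow> 'k::comm_ring)"
  by (simp add: ip_def sum_distrib_left mult.left_commute)
lemma ip_sum_right: "ip x (\<lambda>t. \<Sum>r<(n::nat). f r t) = (\<Sum>r<n. ip x (f r :: 'i \<Rightarrow> 'k::comm_ring))"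
  unfolding ip_def by (simp add: sum_distrib_left) (rule sum.swap)
lemma ip_zero_right[simp]: "ip x (\<lambda>t. 0) = (0::'k::comm_ring)" by (simp add: ip_def)
lemma ip_zero_left[simp]: "ip (\<lambda>t. 0) x = (0::'k::comm_ring)" by (simp add: ip_def)

lemma ip_sum_left:
  assumes "\<And>r. r < (n::nat) \<Longrightarrow> fin (f r)"
  shows "ip (\<lambda>t. \<Sum>r<n. f r t) y = (\<Sum>r<n. ip (f r) (y :: 'i \<Rightarrow> 'k::comm_ring))"
  using assms
proof (induction n)
  case 0 then show ?case by simp
next
  case (Suc n)
  have "ip (\<lambda>t. \<Sum>r<Suc n. f r t) y = ip (\<lambda>t. (\<Sum>r<n. f r t) + f n t) y" by simp
  also have "\<dots> = ip (\<lambda>t. \<Sum>r<n. f r t) y + ip (f n) y"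
    by (rule ip_add_left) (use Suc.prems fin_sum[of n f] in auto)
  finally show ?case using Suc by simp
qed

lemma ip_delta_right: "fin x \<Longrightarrow> ip x (delta s) = (x s :: 'k::field)"
proof -
  assume x: "fin x"
  have "ip x (delta s) = (\<Sum>t\<in>{s}. x t * delta s t)" by (rule ip_expand_r[OF x]) (auto simp: delta_def)
  then show ?thesis by (simp add: delta_def)
qed
lemma ip_delta_left: "ip (delta s) y = (y s :: 'k::field)"
proof -
  have "ip (delta s) y = (\<Sum>t\<in>{s}. delta s t * y t)" by (rule ip_expand_l[OF fin_delta]) (auto simp: delta_def)
  then show ?thesis by (simp add: delta_def)
qed

lemma ip_as_deltas: "fin w \<Longrightarrow> ip w y = (\<Sum>s\<in>{s. w s \<noteq> 0}. w s * ip (delta s) (y :: 'i \<Rightarrow> 'k::field))"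
  unfolding ip_delta_left by (simp add: ip_def)


lemma sum_single:
  assumes "finite S" "r \<in> S" "\<And>s. s \<in> S \<Longrightarrow> s \<noteq> r \<Longrightarrow> g s = 0"
  shows "sum g S = (g r :: 'a::comm_monoid_add)"
proof -
  have "sum g S = g r + sum g (S - {r})" using assms(1,2) by (simp add: sum.remove)
  also have "sum g (S - {r}) = 0" using assms(3) by (intro sum.neutral) auto
  finally show ?thesis by simp
qed

lemma sum_extend:
  assumes "a \<le> (b::nat)" "\<And>r. a \<le> r \<Longrightarrow> r < b \<Longrightarrow> g r = 0"
  shows "(\<Sum>r<a. g r) = (\<Sum>r<b. g r :: 'a::comm_monoid_add)"
  by (rule sum.mono_neutral_left) (use assms in auto)

definition pr :: "(nat \<Rightarrow> 'i \<Rightarrow> 'k::field) \<Rightarrow> (nat \<Rightarrow> 'i \<Rightarrow> 'k) \<Rightarrow> nat \<Rightarrow> ('i \<Rightarrow> 'k) \<Rightarrow> ('i \<Rightarrow> 'k)" where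
  "pr X Y n v = (\<lambda>t. v t - (\<Sum>s<n. ip v (Y s) * X s t))"

lemma fin_lincomb: "(\<And>s. s < n \<Longrightarrow> fin (X s)) \<Longrightarrow> fin (\<lambda>t. \<Sum>s<(n::nat). c s * X s t :: 'k::field)"
  by (rule fin_sum) (auto intro: fin_smult)

lemma ip_lincomb_left:
  "(\<And>s. s < n \<Longrightarrow> fin (X s)) \<Longrightarrow> ip (\<lambda>t. \<Sum>s<(n::nat). c s * X s t) y = (\<Sum>s<n. c s * ip (X s) (y :: 'i \<Rightarrow> 'k::field))"
  by (subst ip_sum_left) (auto intro: fin_smult simp: ip_smult_left)

lemma ip_lincomb_right:
  "ip y (\<lambda>t. \<Sum>s<(n::nat). c s * X s t) = (\<Sum>s<n. c s * ip y (X s :: 'i \<Rightarrow> 'k::field))"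
  by (simp add: ip_sum_right ip_smult_right)

lemma fin_pr: "fin v \<Longrightarrow> (\<And>s. s < n \<Longrightarrow> fin (X s)) \<Longrightarrow> fin (pr X Y n v)"
  unfolding pr_def by (intro fin_diff fin_lincomb) auto

lemma pr_orth:
  assumes v: "fin v" and X: "\<And>s. s < n \<Longrightarrow> fin (X s)"
    and bi: "\<And>s. s < n \<Longrightarrow> s \<noteq> r \<Longrightarrow> ip (X s) (Y r) = 0"
    and dg: "ip (X r) (Y r) = 1 \<or> Y r = (\<lambda>t. 0)" and r: "r < n"
  shows "ip (pr X Y n v) (Y r) = (0 :: 'k::field)"
proof -
  have "ip (pr X Y n v) (Y r) = ip v (Y r) - (\<Sum>s<n. ip v (Y s) * ip (X s) (Y r))"
    unfolding pr_def by (simp add: ip_diff_left[OF v fin_lincomb[OF X]] ip_lincomb_left[OF X])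
  also have "(\<Sum>s<n. ip v (Y s) * ip (X s) (Y r)) = ip v (Y r) * ip (X r) (Y r)"
    by (rule sum_single) (use r bi in auto)
  finally show ?thesis using dg by auto
qed

lemma pr_decomp: "v = (\<lambda>t. (\<Sum>s<n. ip v (Y s) * X s t) + pr X Y n v t)"
  by (simp add: pr_def)

definition stp :: "('i \<Rightarrow> 'k::field) set \<Rightarrow> ('i \<Rightarrow> 'k) set \<Rightarrow> (nat \<Rightarrow> 'i \<Rightarrow> 'k) \<Rightarrow> (nat \<Rightarrow> 'i \<Rightarrow> 'k) \<Rightarrow> nat \<Rightarrow> ('i \<Rightarrow> 'k) \<Rightarrow> ('i \<Rightarrow> 'k) \<times> ('i \<Rightarrow> 'k) \<times> bool" where
  "stp K L A B n v = (let v1 = pr A B n v in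
    if v1 = (\<lambda>t. 0) then ((\<lambda>t. 0), (\<lambda>t. 0), True)
    else if v1 \<in> K then (v1, pr B A n (SOME d. fin d \<and> ip v1 d = 1), True)
    else (v1, pr B A n (SOME l. l \<in> L \<and> ip v1 l = 1), False))"

locale dualpair =
  fixes K L :: "('i \<Rightarrow> 'k::field) set"
  assumes Kfin: "x \<in> K \<Longrightarrow> fin x" and Lfin: "x \<in> L \<Longrightarrow> fin x"
    and K0: "(\<lambda>t. 0) \<in> K" and L0: "(\<lambda>t. 0) \<in> L"
    and Kadd: "x \<in> K \<Longrightarrow> y \<in> K \<Longrightarrow> (\<lambda>t. x t + y t) \<in> K"
    and Ladd: "x \<in> L \<Longrightarrow> y \<in> L \<Longrightarrow> (\<lambda>t. x t + y t) \<in> L"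
    and Ksm: "x \<in> K \<Longrightarrow> (\<lambda>t. c * x t) \<in> K"
    and Lsm: "x \<in> L \<Longrightarrow> (\<lambda>t. c * x t) \<in> L"
    and orth: "x \<in> K \<Longrightarrow> y \<in> L \<Longrightarrow> ip x y = 0"
    and sepK: "fin v \<Longrightarrow> v \<notin> K \<Longrightarrow> \<exists>l\<in>L. ip v l = 1"
    and sepL: "fin w \<Longrightarrow> w \<notin> L \<Longrightarrow> \<exists>k\<in>K. ip w k = 1"
begin

lemma swap: "dualpair L K"
proof
  fix x y assume "x \<in> L" "y \<in> K"
  then show "ip x y = 0" using orth[of y x] ip_comm[of x y] Kfin Lfin by auto
qed (use Kfin Lfin K0 L0 Kadd Ladd Ksm Lsm sepK sepL in auto)

lemma Kdiff: "x \<in> K \<Longrightarrow> y \<in> K \<Longrightarrow> (\<lambda>t. x t - y t) \<in> K"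
  using Kadd[of x "\<lambda>t. (-1) * y t"] Ksm[of y "-1"] by simp

lemma Ksum: "(\<And>s. s < n \<Longrightarrow> c s = 0 \<or> X s \<in> K) \<Longrightarrow> (\<lambda>t. \<Sum>s<(n::nat). c s * X s t) \<in> K"
proof (induction n)
  case 0 then show ?case using K0 by simp
next
  case (Suc n)
  have "(\<lambda>t. c n * X n t) \<in> K"
    using Suc.prems[of n] Ksm[of "X n" "c n"] K0 by auto
  then have "(\<lambda>t. (\<Sum>s<n. c s * X s t) + c n * X n t) \<in> K"
    using Suc by (intro Kadd) auto
  then show ?case by simp
qed

end

lemma dualpair_Ldiff: "dualpair K L \<Longrightarrow> x \<in> L \<Longrightarrow> y \<in> L \<Longrightarrow> (\<lambda>t. x t - y t) \<in> L"
  using dualpair.Kdiff[OF dualpair.swap] by blast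
lemma dualpair_Lsum: "dualpair K L \<Longrightarrow> (\<And>s. s < n \<Longrightarrow> c s = 0 \<or> X s \<in> L) \<Longrightarrow> (\<lambda>t. \<Sum>s<(n::nat). c s * X s t) \<in> L"
  using dualpair.Ksum[OF dualpair.swap] by blast

context dualpair begin

lemma step_props:
  assumes finA0: "\<forall>s<n. fin (A s)" and finB0: "\<forall>s<n. fin (B s)"
    and bi0: "\<forall>r<n. \<forall>s<n. r \<noteq> s \<longrightarrow> ip (A r) (B s) = 0"
    and dg0: "\<forall>s<n. ip (A s) (B s) = 1 \<or> (A s = (\<lambda>t. 0) \<and> B s = (\<lambda>t. 0))"
    and tg0: "\<forall>s<n. A s \<in> K \<or> B s \<in> L"
    and v: "fin v"
    and st: "stp K L A B n v = (a, b, c)"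
  shows "fin a" "fin b" "\<And>r. r < n \<Longrightarrow> ip a (B r) = 0" "\<And>r. r < n \<Longrightarrow> ip (A r) b = 0"
    "ip a b = 1 \<or> (a = (\<lambda>t. 0) \<and> b = (\<lambda>t. 0))" "c \<Longrightarrow> a \<in> K" "\<not> c \<Longrightarrow> b \<in> L"
    "v = (\<lambda>t. (\<Sum>s<n. ip v (B s) * A s t) + ip v b * a t)"
proof -
  have finA: "\<And>s. s < n \<Longrightarrow> fin (A s)" and finB: "\<And>s. s < n \<Longrightarrow> fin (B s)"
    and bi: "\<And>r s. r < n \<Longrightarrow> s < n \<Longrightarrow> r \<noteq> s \<Longrightarrow> ip (A r) (B s) = 0"
    and dg: "\<And>s. s < n \<Longrightarrow> ip (A s) (B s) = 1 \<or> (A s = (\<lambda>t. 0) \<and> B s = (\<lambda>t. 0))"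
    and tg: "\<And>s. s < n \<Longrightarrow> A s \<in> K \<or> B s \<in> L"
    using finA0 finB0 bi0 dg0 tg0 by auto
  define v1 where "v1 = pr A B n v"
  have fv1: "fin v1" unfolding v1_def by (rule fin_pr[OF v finA])
  have dgB: "ip (A s) (B s) = 1 \<or> B s = (\<lambda>t. 0)" if "s < n" for s using dg[OF that] by auto
  have dgA: "ip (B s) (A s) = 1 \<or> A s = (\<lambda>t. 0)" if "s < n" for s
    using dg[OF that] ip_comm[OF finA[OF that] finB[OF that]] by auto
  have biB: "ip (B s) (A r) = 0" if "s < n" "r < n" "s \<noteq> r" for r s
    using bi[of r s] that ip_comm[OF finA[OF that(2)] finB[OF that(1)]] by auto
  have orth1: "ip v1 (B r) = 0" if "r < n" for r
    unfolding v1_def by (rule pr_orth[where X=A and Y=B and r=r and n=n, OF v finA _ dgB[OF that] that]) (use that bi in auto)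
  have dec: "v = (\<lambda>t. (\<Sum>s<n. ip v (B s) * A s t) + v1 t)" unfolding v1_def by (rule pr_decomp)
  have gen: "fin (pr B A n d) \<and> (\<forall>r<n. ip (A r) (pr B A n d) = 0) \<and> ip v1 (pr B A n d) = 1 \<and>
      ip v (pr B A n d) = 1" if d: "fin d" "ip v1 d = 1" for d
  proof -
    have fb: "fin (pr B A n d)" by (rule fin_pr[OF d(1) finB])
    have o2: "ip (A r) (pr B A n d) = 0" if r: "r < n" for r
    proof -
      have "ip (pr B A n d) (A r) = 0"
        by (rule pr_orth[where X=B and Y=A and r=r and n=n, OF d(1) finB _ dgA[OF r] r]) (use biB r in auto)
      then show ?thesis using ip_comm[OF finA[OF r] fb] by simp
    qed
    have "ip v1 (pr B A n d) = ip v1 d - (\<Sum>s<n. ip d (A s) * ip v1 (B s))"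
      unfolding pr_def by (simp add: ip_diff_right ip_lincomb_right)
    also have "\<dots> = 1" using orth1 d by simp
    finally have o3: "ip v1 (pr B A n d) = 1" .
    have "ip v (pr B A n d) = ip (\<lambda>t. (\<Sum>s<n. ip v (B s) * A s t) + v1 t) (pr B A n d)"
      using dec by simp
    also have "\<dots> = (\<Sum>s<n. ip v (B s) * ip (A s) (pr B A n d)) + ip v1 (pr B A n d)"
      by (simp add: ip_add_left[OF fin_lincomb[OF finA] fv1] ip_lincomb_left[OF finA])
    also have "\<dots> = 1" using o2 o3 by simp
    finally show ?thesis using fb o2 o3 by simp
  qed
  show "fin a" "fin b" "\<And>r. r < n \<Longrightarrow> ip a (B r) = 0" "\<And>r. r < n \<Longrightarrow> ip (A r) b = 0"
    "ip a b = 1 \<or> (a = (\<lambda>t. 0) \<and> b = (\<lambda>t. 0))" "c \<Longrightarrow> a \<in> K" "\<not> c \<Longrightarrow> b \<in> L"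
    "v = (\<lambda>t. (\<Sum>s<n. ip v (B s) * A s t) + ip v b * a t)"
  proof -
    consider (z) "v1 = (\<lambda>t. 0)" | (k) "v1 \<noteq> (\<lambda>t. 0)" "v1 \<in> K" | (l) "v1 \<noteq> (\<lambda>t. 0)" "v1 \<notin> K" by blast
    then have "fin a \<and> fin b \<and> (\<forall>r<n. ip a (B r) = 0) \<and> (\<forall>r<n. ip (A r) b = 0) \<and>
      (ip a b = 1 \<or> (a = (\<lambda>t. 0) \<and> b = (\<lambda>t. 0))) \<and> (c \<longrightarrow> a \<in> K) \<and> (\<not> c \<longrightarrow> b \<in> L) \<and>
      v = (\<lambda>t. (\<Sum>s<n. ip v (B s) * A s t) + ip v b * a t)"
    proof cases
      case z
      then have abc: "a = (\<lambda>t. 0)" "b = (\<lambda>t. 0)" "c" using st by (auto simp: stp_def v1_def[symmetric] Let_def)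
      show ?thesis using abc K0 dec z by simp
    next
      case k
      obtain t0 where t0: "v1 t0 \<noteq> 0" using k(1) by auto
      define d0 :: "'i \<Rightarrow> 'k" where "d0 = (\<lambda>s. inverse (v1 t0) * delta t0 s)"
      have "fin d0 \<and> ip v1 d0 = 1"
        unfolding d0_def using t0 fv1 by (simp add: fin_smult ip_smult_right ip_delta_right)
      then have ex: "\<exists>d. fin d \<and> ip v1 d = 1" by blast
      define d where "d = (SOME d. fin d \<and> ip v1 d = 1)"
      have d: "fin d" "ip v1 d = 1" using someI_ex[OF ex] by (auto simp: d_def)
      have abc: "a = v1" "b = pr B A n d" "c" using st k by (auto simp: stp_def v1_def[symmetric] Let_def d_def)
      have "v1 = (\<lambda>t. ip v b * a t)" using gen[OF d] abc by simp
      then show ?thesis using gen[OF d] abc fv1 orth1 k dec by simp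
    next
      case l
      have ex: "\<exists>l. l \<in> L \<and> ip v1 l = 1" using sepK[OF fv1 l(2)] by blast
      define d where "d = (SOME l. l \<in> L \<and> ip v1 l = 1)"
      have dL: "d \<in> L" "ip v1 d = 1" using someI_ex[OF ex] by (auto simp: d_def)
      have d: "fin d" "ip v1 d = 1" using dL Lfin by auto
      have abc: "a = v1" "b = pr B A n d" "\<not> c" using st l by (auto simp: stp_def v1_def[symmetric] Let_def d_def)
      have bL: "pr B A n d \<in> L"
      proof -
        have "(\<lambda>t. \<Sum>s<n. ip d (A s) * B s t) \<in> L"
        proof (rule dualpair_Lsum[OF dualpair_axioms])
          fix s assume s: "s < n"
          show "ip d (A s) = 0 \<or> B s \<in> L"
          proof (cases "A s \<in> K")
            case True
            then have "ip (A s) d = 0" using orth dL by blast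
            then show ?thesis using ip_comm[OF d(1) finA[OF s]] by simp
          next
            case False then show ?thesis using tg[OF s] by simp
          qed
        qed
        then show ?thesis unfolding pr_def by (rule dualpair_Ldiff[OF dualpair_axioms dL(1)])
      qed
      have "v1 = (\<lambda>t. ip v b * a t)" using gen[OF d] abc by simp
      then show ?thesis using gen[OF d] abc fv1 orth1 dec bL by simp
    qed
    then show "fin a" "fin b" "\<And>r. r < n \<Longrightarrow> ip a (B r) = 0" "\<And>r. r < n \<Longrightarrow> ip (A r) b = 0"
      "ip a b = 1 \<or> (a = (\<lambda>t. 0) \<and> b = (\<lambda>t. 0))" "c \<Longrightarrow> a \<in> K" "\<not> c \<Longrightarrow> b \<in> L"
      "v = (\<lambda>t. (\<Sum>s<n. ip v (B s) * A s t) + ip v b * a t)" by auto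
  qed
qed

end


definition nt0 :: "('i::countable \<Rightarrow> 'k::field) set \<Rightarrow> ('i \<Rightarrow> 'k) set \<Rightarrow> nat \<Rightarrow> (nat \<Rightarrow> 'i \<Rightarrow> 'k) \<Rightarrow> (nat \<Rightarrow> 'i \<Rightarrow> 'k) \<Rightarrow> ('i \<Rightarrow> 'k) \<times> ('i \<Rightarrow> 'k) \<times> bool" where
  "nt0 K L n A B = (if even n then stp K L A B n (delta (from_nat (n div 2)))
     else (case stp L K B A n (delta (from_nat (n div 2))) of (b, a, c) \<Rightarrow> (a, b, \<not> c)))"

definition nt :: "('i::countable \<Rightarrow> 'k::field) set \<Rightarrow> ('i \<Rightarrow> 'k) set \<Rightarrow> nat \<Rightarrow> (nat \<Rightarrow> ('i \<Rightarrow> 'k) \<times> ('i \<Rightarrow> 'k) \<times> bool) \<Rightarrow> ('i \<Rightarrow> 'k) \<times> ('i \<Rightarrow> 'k) \<times> bool" where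
  "nt K L n S = nt0 K L n (\<lambda>r. if r < n then fst (S r) else (\<lambda>t. 0)) (\<lambda>r. if r < n then fst (snd (S r)) else (\<lambda>t. 0))"

primrec seqs :: "('i::countable \<Rightarrow> 'k::field) set \<Rightarrow> ('i \<Rightarrow> 'k) set \<Rightarrow> nat \<Rightarrow> (nat \<Rightarrow> ('i \<Rightarrow> 'k) \<times> ('i \<Rightarrow> 'k) \<times> bool)" where
  "seqs K L 0 = (\<lambda>r. ((\<lambda>t. 0), (\<lambda>t. 0), True))"
| "seqs K L (Suc n) = (seqs K L n)(n := nt K L n (seqs K L n))"

definition sq :: "('i::countable \<Rightarrow> 'k::field) set \<Rightarrow> ('i \<Rightarrow> 'k) set \<Rightarrow> nat \<Rightarrow> ('i \<Rightarrow> 'k) \<times> ('i \<Rightarrow> 'k) \<times> bool" where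
  "sq K L n = seqs K L (Suc n) n"

lemma seqs_sq: "r < N \<Longrightarrow> seqs K L N r = sq K L r"
proof (induction N)
  case 0 then show ?case by simp
next
  case (Suc N)
  show ?case
  proof (cases "r = N")
    case True then show ?thesis by (simp add: sq_def)
  next
    case False then show ?thesis using Suc by simp
  qed
qed

lemma sq_rec: "sq K L n = nt K L n (sq K L)"
proof -
  have "sq K L n = nt K L n (seqs K L n)" by (simp add: sq_def)
  also have "\<dots> = nt K L n (sq K L)"
    unfolding nt_def by (rule arg_cong2[where f="nt0 K L n"]) (auto simp: seqs_sq fun_eq_iff)
  finally show ?thesis .
qed

locale dualpairc = dualpair K L for K L :: "('i::countable \<Rightarrow> 'k::field) set"
begin

definition "A r = fst (sq K L r)"
definition "B r = fst (snd (sq K L r))"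
definition "T r = snd (snd (sq K L r))"

definition "good n \<longleftrightarrow> (\<forall>r<n. fin (A r) \<and> fin (B r) \<and> (ip (A r) (B r) = 1 \<or> (A r = (\<lambda>t. 0) \<and> B r = (\<lambda>t. 0)))
   \<and> (T r \<longrightarrow> A r \<in> K) \<and> (\<not> T r \<longrightarrow> B r \<in> L)) \<and>
   (\<forall>r<n. \<forall>s<n. r \<noteq> s \<longrightarrow> ip (A r) (B s) = 0) \<and>
   (\<forall>r<n. (even r \<longrightarrow> delta (from_nat (r div 2)) = (\<lambda>t. \<Sum>s<Suc r. ip (delta (from_nat (r div 2))) (B s) * A s t)) \<and>
          (odd r \<longrightarrow> delta (from_nat (r div 2)) = (\<lambda>t. \<Sum>s<Suc r. ip (delta (from_nat (r div 2))) (A s) * B s t)))"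

lemma good_all: "good n"
proof (induction n)
  case 0 then show ?case by (simp add: good_def)
next
  case (Suc n)
  define A' where "A' = (\<lambda>r. if r < n then A r else (\<lambda>t. 0))"
  define B' where "B' = (\<lambda>r. if r < n then B r else (\<lambda>t. 0))"
  define \<delta> :: "'i \<Rightarrow> 'k" where "\<delta> = delta (from_nat (n div 2))"
  have eqA: "(\<lambda>r. if r < n then fst (sq K L r) else (\<lambda>t. 0)) = A'"
    by (rule ext) (simp add: A'_def A_def)
  have eqB: "(\<lambda>r. if r < n then fst (snd (sq K L r)) else (\<lambda>t. 0)) = B'"
    by (rule ext) (simp add: B'_def B_def)
  have fd: "fin \<delta>" by (simp add: \<delta>_def)
  have sqn: "sq K L n = nt0 K L n A' B'"
    by (subst sq_rec) (simp only: nt_def eqA eqB)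
  have G: "\<And>r. r < n \<Longrightarrow> fin (A r) \<and> fin (B r) \<and> (ip (A r) (B r) = 1 \<or> (A r = (\<lambda>t. 0) \<and> B r = (\<lambda>t. 0)))
   \<and> (T r \<longrightarrow> A r \<in> K) \<and> (\<not> T r \<longrightarrow> B r \<in> L)"
    and Gbi: "\<And>r s. r < n \<Longrightarrow> s < n \<Longrightarrow> r \<noteq> s \<Longrightarrow> ip (A r) (B s) = 0"
    using Suc.IH by (auto simp: good_def)
  have finA': "fin (A' s)" if "s < n" for s using G[OF that] that by (simp add: A'_def)
  have finB': "fin (B' s)" if "s < n" for s using G[OF that] that by (simp add: B'_def)
  have bi': "ip (A' r) (B' s) = 0" if "r < n" "s < n" "r \<noteq> s" for r s using Gbi[OF that] that by (simp add: A'_def B'_def)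
  have dg': "ip (A' s) (B' s) = 1 \<or> (A' s = (\<lambda>t. 0) \<and> B' s = (\<lambda>t. 0))" if "s < n" for s
    using G[OF that] that by (simp add: A'_def B'_def)
  have tg': "A' s \<in> K \<or> B' s \<in> L" if "s < n" for s
    using G[OF that] that by (auto simp: A'_def B'_def)
  have sumA: "(\<Sum>s<n. f s * A' s t) = (\<Sum>s<n. f s * A s t)" for f t by (rule sum.cong) (auto simp: A'_def)
  have sumB: "(\<Sum>s<n. f s * B' s t) = (\<Sum>s<n. f s * B s t)" for f t by (rule sum.cong) (auto simp: B'_def)
  have sumA2: "(\<Sum>s<n. ip v (A' s) * B s t) = (\<Sum>s<n. ip v (A s) * B s t)" for v t by (rule sum.cong) (auto simp: A'_def)
  have sumB2: "(\<Sum>s<n. ip v (B' s) * A s t) = (\<Sum>s<n. ip v (B s) * A s t)" for v t by (rule sum.cong) (auto simp: B'_def)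
  have new: "fin (A n) \<and> fin (B n) \<and> (ip (A n) (B n) = 1 \<or> (A n = (\<lambda>t. 0) \<and> B n = (\<lambda>t. 0)))
   \<and> (T n \<longrightarrow> A n \<in> K) \<and> (\<not> T n \<longrightarrow> B n \<in> L) \<and> (\<forall>r<n. ip (A n) (B r) = 0 \<and> ip (A r) (B n) = 0) \<and>
   (even n \<longrightarrow> \<delta> = (\<lambda>t. \<Sum>s<Suc n. ip \<delta> (B s) * A s t)) \<and>
   (odd n \<longrightarrow> \<delta> = (\<lambda>t. \<Sum>s<Suc n. ip \<delta> (A s) * B s t))"
  proof (cases "even n")
    case True
    have st: "stp K L A' B' n \<delta> = (A n, B n, T n)"
      using sqn True by (simp add: nt0_def \<delta>_def A_def B_def T_def)
    have h: "\<forall>s<n. fin (A' s)" "\<forall>s<n. fin (B' s)" "\<forall>r<n. \<forall>s<n. r \<noteq> s \<longrightarrow> ip (A' r) (B' s) = 0"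
      "\<forall>s<n. ip (A' s) (B' s) = 1 \<or> (A' s = (\<lambda>t. 0) \<and> B' s = (\<lambda>t. 0))" "\<forall>s<n. A' s \<in> K \<or> B' s \<in> L"
      using finA' finB' bi' dg' tg' by auto
    note P = step_props[OF h fd st]
    have "\<delta> = (\<lambda>t. (\<Sum>s<n. ip \<delta> (B s) * A s t) + ip \<delta> (B n) * A n t)"
      using P(8) by (simp add: sumA sumB2 cong: sum.cong)
    then have cov: "\<delta> = (\<lambda>t. \<Sum>s<Suc n. ip \<delta> (B s) * A s t)" by simp
    show ?thesis using P(1-7) True cov by (auto simp: A'_def B'_def)
  next
    case False
    interpret S: dualpair L K by (rule swap)
    obtain b a c where st0: "stp L K B' A' n \<delta> = (b, a, c)" by (metis prod_cases3)
    have abc: "A n = a" "B n = b" "T n = (\<not> c)"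
      using sqn False st0 by (simp_all add: nt0_def \<delta>_def A_def B_def T_def)
    have bi'': "ip (B' r) (A' s) = 0" if "r < n" "s < n" "r \<noteq> s" for r s
      using bi'[of s r] that ip_comm[OF finA'[OF that(2)] finB'[OF that(1)]] by auto
    have dg'': "ip (B' s) (A' s) = 1 \<or> (B' s = (\<lambda>t. 0) \<and> A' s = (\<lambda>t. 0))" if "s < n" for s
      using dg'[OF that] ip_comm[OF finA'[OF that] finB'[OF that]] by auto
    have tg'': "B' s \<in> L \<or> A' s \<in> K" if "s < n" for s using tg'[OF that] by auto
    have h: "\<forall>s<n. fin (B' s)" "\<forall>s<n. fin (A' s)" "\<forall>r<n. \<forall>s<n. r \<noteq> s \<longrightarrow> ip (B' r) (A' s) = 0"
      "\<forall>s<n. ip (B' s) (A' s) = 1 \<or> (B' s = (\<lambda>t. 0) \<and> A' s = (\<lambda>t. 0))" "\<forall>s<n. B' s \<in> L \<or> A' s \<in> K"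
      using finA' finB' bi'' dg'' tg'' by auto
    note P = S.step_props[OF h fd st0]
    have fa: "fin a" and fb: "fin b" using P by auto
    have "\<delta> = (\<lambda>t. (\<Sum>s<n. ip \<delta> (A s) * B s t) + ip \<delta> (A n) * B n t)"
      using P(8) abc by (simp add: sumB sumA2 cong: sum.cong)
    then have cov: "\<delta> = (\<lambda>t. \<Sum>s<Suc n. ip \<delta> (A s) * B s t)" by simp
    have o1: "ip (A n) (B r) = 0" if "r < n" for r
      using P(4)[OF that] ip_comm[OF finB'[OF that] fa] that by (simp add: B'_def abc)
    have o2: "ip (A r) (B n) = 0" if "r < n" for r
      using P(3)[OF that] ip_comm[OF fb finA'[OF that]] that by (simp add: A'_def abc)
    have d: "ip (A n) (B n) = 1 \<or> (A n = (\<lambda>t. 0) \<and> B n = (\<lambda>t. 0))"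
      using P(5) ip_comm[OF fb fa] abc by auto
    show ?thesis using fa fb d o1 o2 P(6,7) abc False cov by auto
  qed
  have h1: "\<forall>r<Suc n. fin (A r) \<and> fin (B r) \<and> (ip (A r) (B r) = 1 \<or> (A r = (\<lambda>t. 0) \<and> B r = (\<lambda>t. 0))) \<and>
       (T r \<longrightarrow> A r \<in> K) \<and> (\<not> T r \<longrightarrow> B r \<in> L)"
  proof (intro allI impI)
    fix r assume "r < Suc n"
    then consider "r < n" | "r = n" by linarith
    then show "fin (A r) \<and> fin (B r) \<and> (ip (A r) (B r) = 1 \<or> (A r = (\<lambda>t. 0) \<and> B r = (\<lambda>t. 0))) \<and>
       (T r \<longrightarrow> A r \<in> K) \<and> (\<not> T r \<longrightarrow> B r \<in> L)"
      using G new by cases auto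
  qed
  have h2: "\<forall>r<Suc n. \<forall>s<Suc n. r \<noteq> s \<longrightarrow> ip (A r) (B s) = 0"
  proof (intro allI impI)
    fix r s assume "r < Suc n" "s < Suc n" "r \<noteq> s"
    then consider "r < n" "s < n" | "r = n" "s < n" | "r < n" "s = n" by linarith
    then show "ip (A r) (B s) = 0" using Gbi new \<open>r \<noteq> s\<close> by cases auto
  qed
  have h3: "\<forall>r<Suc n. (even r \<longrightarrow> delta (from_nat (r div 2)) = (\<lambda>t. \<Sum>s<Suc r. ip (delta (from_nat (r div 2))) (B s) * A s t)) \<and>
          (odd r \<longrightarrow> delta (from_nat (r div 2)) = (\<lambda>t. \<Sum>s<Suc r. ip (delta (from_nat (r div 2))) (A s) * B s t))"
  proof (intro allI impI)
    fix r assume r: "r < Suc n"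
    then consider "r < n" | "r = n" by linarith
    then show "(even r \<longrightarrow> delta (from_nat (r div 2)) = (\<lambda>t. \<Sum>s<Suc r. ip (delta (from_nat (r div 2))) (B s) * A s t)) \<and>
          (odd r \<longrightarrow> delta (from_nat (r div 2)) = (\<lambda>t. \<Sum>s<Suc r. ip (delta (from_nat (r div 2))) (A s) * B s t))"
    proof cases
      case 1 then show ?thesis using Suc.IH unfolding good_def by blast
    next
      case 2 then show ?thesis using new unfolding \<delta>_def by blast
    qed
  qed
  show ?case unfolding good_def by (rule conjI[OF h1 conjI[OF h2 h3]])
qed
end


context dualpairc begin

lemma good1: "\<forall>r<N. fin (A r) \<and> fin (B r) \<and> (ip (A r) (B r) = 1 \<or> (A r = (\<lambda>t. 0) \<and> B r = (\<lambda>t. 0)))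
   \<and> (T r \<longrightarrow> A r \<in> K) \<and> (\<not> T r \<longrightarrow> B r \<in> L)"
  using good_all[of N] unfolding good_def by (rule conjunct1)
lemma good2: "\<forall>r<N. \<forall>s<N. r \<noteq> s \<longrightarrow> ip (A r) (B s) = 0"
  using good_all[of N] unfolding good_def by (rule conjunct1[OF conjunct2])
lemma good3: "\<forall>r<N. (even r \<longrightarrow> delta (from_nat (r div 2)) = (\<lambda>t. \<Sum>s<Suc r. ip (delta (from_nat (r div 2))) (B s) * A s t)) \<and>
          (odd r \<longrightarrow> delta (from_nat (r div 2)) = (\<lambda>t. \<Sum>s<Suc r. ip (delta (from_nat (r div 2))) (A s) * B s t))"
  using good_all[of N] unfolding good_def by (rule conjunct2[OF conjunct2])

lemma good_facts: "fin (A r)" "fin (B r)" "ip (A r) (B r) = 1 \<or> (A r = (\<lambda>t. 0) \<and> B r = (\<lambda>t. 0))"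
  "T r \<Longrightarrow> A r \<in> K" "\<not> T r \<Longrightarrow> B r \<in> L"
proof -
  have "r < Suc r" by simp
  note g = good1[of "Suc r", rule_format, OF this]
  show "fin (A r)" "fin (B r)" "ip (A r) (B r) = 1 \<or> (A r = (\<lambda>t. 0) \<and> B r = (\<lambda>t. 0))"
    "T r \<Longrightarrow> A r \<in> K" "\<not> T r \<Longrightarrow> B r \<in> L" using g by simp_all
qed

lemma bi: assumes "r \<noteq> s" shows "ip (A r) (B s) = 0"
proof -
  have "r < Suc (max r s)" "s < Suc (max r s)" by auto
  then show ?thesis using good2[of "Suc (max r s)", rule_format] assms by blast
qed

definition "Np t0 = Suc (2 * to_nat t0)"
definition "Nd t0 = Suc (Suc (2 * to_nat t0))"

lemma covP: "delta t0 = (\<lambda>t. \<Sum>s<Np t0. ip (delta t0) (B s) * A s t)"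
proof -
  have l: "2 * to_nat t0 < Suc (2 * to_nat t0)" by simp
  have e: "even (2 * to_nat t0)" by simp
  have "delta (from_nat ((2 * to_nat t0) div 2)) = (\<lambda>t. \<Sum>s<Suc (2 * to_nat t0). ip (delta (from_nat ((2 * to_nat t0) div 2))) (B s) * A s t)"
    using conjunct1[OF good3[of "Suc (2 * to_nat t0)", rule_format, OF l]] e by (rule mp)
  then show ?thesis by (simp add: Np_def)
qed

lemma covD: "delta t0 = (\<lambda>t. \<Sum>s<Nd t0. ip (delta t0) (A s) * B s t)"
proof -
  have l: "Suc (2 * to_nat t0) < Suc (Suc (2 * to_nat t0))" by simp
  have e: "odd (Suc (2 * to_nat t0))" by simp
  have "delta (from_nat (Suc (2 * to_nat t0) div 2)) = (\<lambda>t. \<Sum>s<Suc (Suc (2 * to_nat t0)). ip (delta (from_nat (Suc (2 * to_nat t0) div 2))) (A s) * B s t)"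
    using conjunct2[OF good3[of "Suc (Suc (2 * to_nat t0))", rule_format, OF l]] e by (rule mp)
  then show ?thesis by (simp add: Nd_def)
qed

definition "csp v N \<longleftrightarrow> v = (\<lambda>t. \<Sum>s<N. ip v (B s) * A s t)"

lemma csp_vanish: assumes "csp v N" "N \<le> s" shows "ip v (B s) = 0"
proof -
  have "ip v (B s) = ip (\<lambda>t. \<Sum>r<N. ip v (B r) * A r t) (B s)"
    using assms(1) unfolding csp_def by simp
  also have "\<dots> = (\<Sum>r<N. ip v (B r) * ip (A r) (B s))"
    by (rule ip_lincomb_left) (simp add: good_facts)
  also have "\<dots> = 0" using assms(2) bi by (intro sum.neutral) auto
  finally show ?thesis .
qed

lemma csp_mono: assumes "csp v N" "N \<le> M" shows "csp v M"
proof -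
  have "(\<Sum>s<N. ip v (B s) * A s t) = (\<Sum>s<M. ip v (B s) * A s t)" for t
    by (rule sum_extend) (use assms csp_vanish in auto)
  then show ?thesis using assms(1) unfolding csp_def by simp
qed

lemma B_vanish: assumes "Np s0 \<le> s" shows "B s s0 = 0"
proof -
  have c: "csp (delta s0) (Np s0)" unfolding csp_def by (rule covP)
  have "ip (delta s0) (B s) = 0" by (rule csp_vanish[OF c assms])
  then show ?thesis by (simp add: ip_delta_left)
qed

lemma A_vanish: assumes "Nd t0 \<le> r" shows "A r t0 = 0"
proof -
  have "A r t0 = ip (A r) (delta t0)" by (simp add: ip_delta_right good_facts)
  also have "\<dots> = ip (A r) (\<lambda>t. \<Sum>s<Nd t0. ip (delta t0) (A s) * B s t)" using covD[of t0] by simp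
  also have "\<dots> = (\<Sum>s<Nd t0. ip (delta t0) (A s) * ip (A r) (B s))" by (rule ip_lincomb_right)
  also have "\<dots> = 0" using assms bi by (intro sum.neutral) auto
  finally show ?thesis .
qed

lemma csp_fin:
  assumes w: "fin w" and N: "\<And>t0. w t0 \<noteq> 0 \<Longrightarrow> Np t0 \<le> N"
  shows "csp w N"
proof -
  let ?S = "{t0. w t0 \<noteq> 0}"
  have fS: "finite ?S" using w by (simp add: fin_def)
  have cd: "(\<Sum>s<N. B s t0 * A s t) = delta t0 t" if "t0 \<in> ?S" for t0 t
  proof -
    have c: "csp (delta t0) (Np t0)" unfolding csp_def by (rule covP)
    have "csp (delta t0) N" by (rule csp_mono[OF c]) (use N that in auto)
    then have "delta t0 = (\<lambda>t. \<Sum>s<N. ip (delta t0) (B s) * A s t)" by (simp add: csp_def)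
    then show ?thesis by (simp add: ip_delta_left fun_eq_iff)
  qed
  have "(\<Sum>s<N. ip w (B s) * A s t) = w t" for t
  proof -
    have "(\<Sum>s<N. ip w (B s) * A s t) = (\<Sum>s<N. \<Sum>t0\<in>?S. w t0 * B s t0 * A s t)"
      by (simp add: ip_def sum_distrib_right)
    also have "\<dots> = (\<Sum>t0\<in>?S. w t0 * (\<Sum>s<N. B s t0 * A s t))"
      by (subst sum.swap) (simp add: sum_distrib_left mult.assoc)
    also have "\<dots> = (\<Sum>t0\<in>?S. w t0 * delta t0 t)" by (rule sum.cong) (auto simp: cd)
    also have "\<dots> = w t"
    proof (cases "t \<in> ?S")
      case True
      show ?thesis by (subst sum_single[OF fS True]) (auto simp: delta_def)
    next
      case False
      then have "(\<Sum>t0\<in>?S. w t0 * delta t0 t) = 0" by (intro sum.neutral) (auto simp: delta_def)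
      then show ?thesis using False by simp
    qed
    finally show ?thesis .
  qed
  then show ?thesis unfolding csp_def by (simp add: fun_eq_iff)
qed

lemma csp_exists: "fin w \<Longrightarrow> \<exists>N. csp w N"
proof -
  assume w: "fin w"
  let ?S = "{t0. w t0 \<noteq> 0}"
  have fS: "finite ?S" using w by (simp add: fin_def)
  show ?thesis
  proof (intro exI csp_fin[OF w])
    fix t0 assume "w t0 \<noteq> 0"
    then show "Np t0 \<le> (\<Sum>t0\<in>?S. Np t0)" using fS by (intro member_le_sum) auto
  qed
qed

definition "Q t s = (\<Sum>r<Nd t. (if T r then A r t else 0) * B r s)"

lemma Q_row: "finite {s. Q t s \<noteq> 0}"
proof (rule finite_subset)
  show "{s. Q t s \<noteq> 0} \<subseteq> (\<Union>r<Nd t. {s. B r s \<noteq> 0})"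
  proof
    fix s assume "s \<in> {s. Q t s \<noteq> 0}"
    then have "(\<Sum>r<Nd t. (if T r then A r t else 0) * B r s) \<noteq> 0" by (simp add: Q_def)
    then obtain r where "r < Nd t" "(if T r then A r t else 0) * B r s \<noteq> 0"
      by (metis (no_types, lifting) lessThan_iff sum.neutral)
    then show "s \<in> (\<Union>r<Nd t. {s. B r s \<noteq> 0})" by auto
  qed
  show "finite (\<Union>r<Nd t. {s. B r s \<noteq> 0})" using good_facts(2) by (auto simp: fin_def)
qed

lemma Q_col: "finite {t. Q t s \<noteq> 0}"
proof (rule finite_subset)
  show "{t. Q t s \<noteq> 0} \<subseteq> (\<Union>r<Np s. {t. A r t \<noteq> 0})"
  proof
    fix t assume "t \<in> {t. Q t s \<noteq> 0}"
    then have "(\<Sum>r<Nd t. (if T r then A r t else 0) * B r s) \<noteq> 0" by (simp add: Q_def)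
    then obtain r where "r < Nd t" "(if T r then A r t else 0) * B r s \<noteq> 0"
      by (metis (no_types, lifting) lessThan_iff sum.neutral)
    then have "A r t \<noteq> 0" "B r s \<noteq> 0" by (auto split: if_splits)
    moreover have "r < Np s" using B_vanish[of s r] \<open>B r s \<noteq> 0\<close> by (meson not_le)
    ultimately show "t \<in> (\<Union>r<Np s. {t. A r t \<noteq> 0})" by auto
  qed
  show "finite (\<Union>r<Np s. {t. A r t \<noteq> 0})" using good_facts(1) by (auto simp: fin_def)
qed

lemma Q_mv:
  assumes c: "csp w N"
  shows "ip w (Q t) = (\<Sum>r<N. (if T r then ip w (B r) else 0) * A r t)"
proof -
  have Qt: "Q t = (\<lambda>s. \<Sum>r<Nd t. (if T r then A r t else 0) * B r s)" by (simp add: Q_def fun_eq_iff)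
  have "ip w (Q t) = (\<Sum>r<Nd t. (if T r then A r t else 0) * ip w (B r))"
    unfolding Qt by (rule ip_lincomb_right)
  also have "\<dots> = (\<Sum>r<Nd t + N. (if T r then A r t else 0) * ip w (B r))"
    by (rule sum_extend) (auto simp: A_vanish)
  also have "\<dots> = (\<Sum>r<Nd t + N. (if T r then ip w (B r) else 0) * A r t)"
    by (rule sum.cong) auto
  also have "\<dots> = (\<Sum>r<N. (if T r then ip w (B r) else 0) * A r t)"
    by (rule sum_extend[symmetric]) (auto simp: csp_vanish[OF c])
  finally show ?thesis .
qed

lemma Q_K: assumes w: "fin w" shows "(\<lambda>t. ip w (Q t)) \<in> K"
proof -
  obtain N where c: "csp w N" using csp_exists[OF w] by blast
  have "(\<lambda>t. \<Sum>r<N. (if T r then ip w (B r) else 0) * A r t) \<in> K"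
    by (rule Ksum) (auto simp: good_facts(4))
  then show ?thesis by (simp add: Q_mv[OF c])
qed

lemma Q_fix: assumes w: "w \<in> K" shows "(\<lambda>t. ip w (Q t)) = w"
proof -
  have fw: "fin w" using w Kfin by blast
  obtain N where c: "csp w N" using csp_exists[OF fw] by blast
  have z: "ip w (B r) = 0" if "\<not> T r" for r using orth[OF w good_facts(5)[OF that]] .
  have "ip w (Q t) = w t" for t
  proof -
    have "ip w (Q t) = (\<Sum>r<N. ip w (B r) * A r t)"
      unfolding Q_mv[OF c] by (rule sum.cong) (auto simp: z)
    also have "\<dots> = w t" using c unfolding csp_def by (metis (no_types, lifting))
    finally show ?thesis .
  qed
  then show ?thesis by (simp add: fun_eq_iff)
qed

lemma Q_all: "\<exists>Q. (\<forall>t. finite {s. Q t s \<noteq> 0}) \<and> (\<forall>s. finite {t. Q t s \<noteq> 0}) \<and>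
   (\<forall>w. fin w \<longrightarrow> (\<lambda>t. ip w (Q t)) \<in> K) \<and> (\<forall>w\<in>K. (\<lambda>t. ip w (Q t)) = w)"
  using Q_row Q_col Q_K Q_fix by blast

end


lemma core:
  fixes \<rho> :: "'a \<Rightarrow> 'i::countable \<Rightarrow> 'k::field"
  assumes fr: "\<And>\<alpha>. fin (\<rho> \<alpha>)"
  defines "K \<equiv> {w. fin w \<and> (\<forall>\<alpha>. ip (\<rho> \<alpha>) w = 0)}"
  shows "\<exists>Q. (\<forall>t. finite {s. Q t s \<noteq> 0}) \<and> (\<forall>s. finite {t. Q t s \<noteq> 0}) \<and>
   (\<forall>w. fin w \<longrightarrow> (\<lambda>t. ip w (Q t)) \<in> K) \<and> (\<forall>w\<in>K. (\<lambda>t. ip w (Q t)) = w)"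
proof -
  define L where "L = {y. fin y \<and> (\<forall>x\<in>K. ip x y = (0::'k))}"
  have "dualpairc K L"
  proof
    fix x assume "x \<in> K" then show "fin x" by (simp add: K_def)
  next
    fix x assume "x \<in> L" then show "fin x" by (simp add: L_def)
  next
    show "(\<lambda>t. 0) \<in> K" by (simp add: K_def)
    show "(\<lambda>t. 0) \<in> L" by (simp add: L_def)
  next
    fix x y assume "x \<in> K" "y \<in> K"
    then show "(\<lambda>t. x t + y t) \<in> K" by (simp add: K_def fin_add ip_add_right)
  next
    fix x y assume "x \<in> L" "y \<in> L"
    then show "(\<lambda>t. x t + y t) \<in> L" by (simp add: L_def fin_add ip_add_right)
  next
    fix x c assume "x \<in> K"
    then show "(\<lambda>t. c * x t) \<in> K" by (simp add: K_def fin_smult ip_smult_right)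
  next
    fix x c assume "x \<in> L"
    then show "(\<lambda>t. c * x t) \<in> L" by (simp add: L_def fin_smult ip_smult_right)
  next
    fix x y assume "x \<in> K" "y \<in> L" then show "ip x y = 0" by (simp add: L_def)
  next
    fix v assume v: "fin v" "v \<notin> K"
    then obtain \<alpha> where a: "ip (\<rho> \<alpha>) v \<noteq> 0" by (auto simp: K_def)
    define c where "c = ip (\<rho> \<alpha>) v"
    have cv: "ip v (\<rho> \<alpha>) = c" using ip_comm[OF v(1) fr] by (simp add: c_def)
    define l where "l = (\<lambda>t. inverse c * \<rho> \<alpha> t)"
    have "l \<in> L"
    proof -
      have "ip x l = 0" if "x \<in> K" for x
      proof -
        have fx: "fin x" using that by (simp add: K_def)
        have "ip x l = inverse c * ip x (\<rho> \<alpha>)" by (simp add: l_def ip_smult_right)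
        also have "ip x (\<rho> \<alpha>) = ip (\<rho> \<alpha>) x" by (rule ip_comm[OF fx fr])
        also have "\<dots> = 0" using that by (simp add: K_def)
        finally show ?thesis by simp
      qed
      then show ?thesis by (simp add: L_def l_def fin_smult fr)
    qed
    moreover have "ip v l = 1" using a by (simp add: l_def ip_smult_right cv c_def)
    ultimately show "\<exists>l\<in>L. ip v l = 1" by blast
  next
    fix w assume w: "fin w" "w \<notin> L"
    then obtain x where x: "x \<in> K" "ip x w \<noteq> 0" by (auto simp: L_def)
    have fx: "fin x" using x by (simp add: K_def)
    define c where "c = ip x w"
    define k where "k = (\<lambda>t. inverse c * x t)"
    have "k \<in> K" using x by (simp add: k_def K_def fin_smult ip_smult_right)
    moreover have "ip w k = 1"
      using x ip_comm[OF w(1) fx] by (simp add: k_def ip_smult_right c_def)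
    ultimately show "\<exists>k\<in>K. ip w k = 1" by blast
  qed
  then show ?thesis by (rule dualpairc.Q_all)
qed


lemma rcfm_lsum: "lsum (RCFM :: (nat \<Rightarrow> nat \<Rightarrow> 'k::field) ring) g k = (\<lambda>a c. \<Sum>j<k. g j a c)"
  by (induction k) (simp_all add: rcfm_add rcfm_zero)

lemma rcfm_mult_ip: "mult (RCFM :: (nat \<Rightarrow> nat \<Rightarrow> 'k::field) ring) X Y = (\<lambda>a c. ip (X a) (\<lambda>b. Y b c))"
  by (simp add: rcfm_mult ip_def)

lemma rcfm_row: "X \<in> carrier (RCFM :: (nat \<Rightarrow> nat \<Rightarrow> 'k::field) ring) \<Longrightarrow> fin (X a)"
  by (simp add: rcfm_carrier rcfm_carrier_def fin_def)
lemma rcfm_col: "X \<in> carrier (RCFM :: (nat \<Rightarrow> nat \<Rightarrow> 'k::field) ring) \<Longrightarrow> fin (\<lambda>b. X b c)"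
  by (simp add: rcfm_carrier rcfm_carrier_def fin_def)

definition col :: "nat \<Rightarrow> (nat \<Rightarrow> nat \<Rightarrow> nat \<Rightarrow> 'k::field) \<Rightarrow> nat \<Rightarrow> (nat \<times> nat \<Rightarrow> 'k)" where
  "col m v c = (\<lambda>(j, b). if j < m then v j b c else 0)"

lemma free_carrier_rcfm:
  "v \<in> carrier (free_rmod (RCFM :: (nat \<Rightarrow> nat \<Rightarrow> 'k::field) ring) m) \<longleftrightarrow>
     (\<forall>j<m. v j \<in> rcfm_carrier) \<and> (\<forall>j\<ge>m. v j = (\<lambda>a c. 0))"
  by (simp add: free_simps rcfm_carrier rcfm_zero)

lemma fin_col:
  assumes v: "v \<in> carrier (free_rmod (RCFM :: (nat \<Rightarrow> nat \<Rightarrow> 'k::field) ring) m)"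
  shows "fin (col m v c)"
proof -
  have "{p. col m v c p \<noteq> 0} \<subseteq> {..<m} \<times> (\<Union>j<m. {b. v j b c \<noteq> 0})"
    by (auto simp: col_def split: if_splits)
  moreover have "finite ({..<m} \<times> (\<Union>j<m. {b. v j b c \<noteq> 0}))"
    using v by (auto simp: free_carrier_rcfm rcfm_carrier_def)
  ultimately show ?thesis unfolding fin_def by (rule finite_subset)
qed

definition rho :: "nat \<Rightarrow> nat \<Rightarrow> (nat \<Rightarrow> nat \<Rightarrow> nat \<Rightarrow> nat \<Rightarrow> 'k::field) \<Rightarrow> (nat \<times> nat) + (nat \<times> nat) \<Rightarrow> (nat \<times> nat \<Rightarrow> 'k)" where
  "rho m n F x = (case x of Inl (i, a) \<Rightarrow> (\<lambda>(j, b). if i < n \<and> j < m then F j i a b else 0)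
                          | Inr p \<Rightarrow> (if m \<le> fst p then delta p else (\<lambda>_. 0)))"

lemma fin_rho:
  assumes F: "\<And>j i. j < m \<Longrightarrow> i < n \<Longrightarrow> F j i \<in> carrier (RCFM :: (nat \<Rightarrow> nat \<Rightarrow> 'k::field) ring)"
  shows "fin (rho m n F x)"
proof (cases x)
  case (Inl ia)
  obtain i a where ia: "ia = (i, a)" by (cases ia)
  show ?thesis
  proof (cases "i < n")
    case True
    have "{p. rho m n F x p \<noteq> 0} \<subseteq> {..<m} \<times> (\<Union>j<m. {b. F j i a b \<noteq> 0})"
      using True by (auto simp: rho_def Inl ia split: if_splits)
    moreover have "finite ({..<m} \<times> (\<Union>j<m. {b. F j i a b \<noteq> 0}))"
    proof -
      have "finite {b. F j i a b \<noteq> 0}" if "j < m" for j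
        using rcfm_row[OF F[OF that True], of a] by (simp add: fin_def)
      then show ?thesis by auto
    qed
    ultimately show ?thesis unfolding fin_def by (rule finite_subset)
  next
    case False
    then show ?thesis by (simp add: rho_def Inl ia fin_def)
  qed
next
  case (Inr p)
  then show ?thesis by (simp add: rho_def)
qed

lemma ip_rho_Inl:
  assumes F: "\<And>j. j < m \<Longrightarrow> F j i \<in> carrier (RCFM :: (nat \<Rightarrow> nat \<Rightarrow> 'k::field) ring)" and i: "i < n"
  shows "ip (rho m n F (Inl (i, a))) (col m v c) = (\<Sum>j<m. ip (F j i a) (\<lambda>b. v j b c))"
proof -
  define Bs where "Bs = (\<Union>j<m. {b. F j i a b \<noteq> 0})"
  have fB: "finite Bs"
  proof -
    have "finite {b. F j i a b \<noteq> 0}" if "j < m" for j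
      using rcfm_row[OF F[OF that], of a] by (simp add: fin_def)
    then show ?thesis by (auto simp: Bs_def)
  qed
  have fr: "fin (rho m n F (Inl (i, a)))"
  proof -
    have "{p. rho m n F (Inl (i, a)) p \<noteq> 0} \<subseteq> {..<m} \<times> Bs"
      using i by (auto simp: rho_def Bs_def split: if_splits)
    then show ?thesis unfolding fin_def using fB by (meson finite_SigmaI finite_lessThan finite_subset)
  qed
  have sub: "{p. rho m n F (Inl (i, a)) p \<noteq> 0} \<subseteq> {..<m} \<times> Bs"
    using i by (auto simp: rho_def Bs_def split: if_splits)
  have "ip (rho m n F (Inl (i, a))) (col m v c) = (\<Sum>p\<in>{..<m} \<times> Bs. rho m n F (Inl (i, a)) p * col m v c p)"
    by (rule ip_expand_l[OF fr _ sub]) (use fB in simp)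
  also have "\<dots> = (\<Sum>(j, b)\<in>{..<m} \<times> Bs. F j i a b * v j b c)"
    by (rule sum.cong) (use i in \<open>auto simp: rho_def col_def\<close>)
  also have "\<dots> = (\<Sum>j<m. \<Sum>b\<in>Bs. F j i a b * v j b c)"
    by (simp only: sum.cartesian_product)
  also have "\<dots> = (\<Sum>j<m. ip (F j i a) (\<lambda>b. v j b c))"
  proof (rule sum.cong[OF refl])
    fix j assume j: "j \<in> {..<m}"
    have "ip (F j i a) (\<lambda>b. v j b c) = (\<Sum>b\<in>Bs. F j i a b * v j b c)"
      by (rule ip_expand_l[OF rcfm_row[OF F] fB]) (use j in \<open>auto simp: Bs_def\<close>)
    then show "(\<Sum>b\<in>Bs. F j i a b * v j b c) = ip (F j i a) (\<lambda>b. v j b c)" by simp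
  qed
  finally show ?thesis .
qed

lemma ip_rho_other:
  assumes "i \<ge> n" shows "ip (rho m n F (Inl (i, a))) w = (0::'k::field)"
proof -
  have "rho m n F (Inl (i, a)) = (\<lambda>_. 0)" using assms by (auto simp: rho_def fun_eq_iff)
  then show ?thesis by simp
qed

lemma ip_rho_Inr: "ip (rho m n F (Inr p)) (col m v c) = (0::'k::field)"
  by (cases p) (auto simp: rho_def ip_delta_left col_def)


lemma f_repr:
  fixes f :: "(nat \<Rightarrow> nat \<Rightarrow> nat \<Rightarrow> 'k::field) \<Rightarrow> (nat \<Rightarrow> nat \<Rightarrow> nat \<Rightarrow> 'k)"
  assumes f: "f \<in> rhom (RCFM :: (nat \<Rightarrow> nat \<Rightarrow> 'k) ring) (free_rmod RCFM m) (free_rmod RCFM n)"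
    and v: "v \<in> carrier (free_rmod (RCFM :: (nat \<Rightarrow> nat \<Rightarrow> 'k) ring) m)" and i: "i < n"
  shows "f v i = (\<lambda>a c. \<Sum>j<m. ip (f (unitv RCFM j) i a) (\<lambda>b. v j b c))"
proof -
  let ?R = "RCFM :: (nat \<Rightarrow> nat \<Rightarrow> 'k) ring"
  let ?F = "free_rmod ?R m" and ?G = "free_rmod ?R n"
  have R: "ring ?R" by (rule ring_RCFM)
  interpret R: ring ?R by (rule R)
  have F: "right_module ?R ?F" by (rule free_right_module[OF R])
  have G: "right_module ?R ?G" by (rule free_right_module[OF R])
  interpret F: abelian_group ?F using F by (simp add: right_module_def)
  interpret G: abelian_group ?G using G by (simp add: right_module_def)
  have fc: "f \<in> carrier ?F \<rightarrow> carrier ?G"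
    and fa: "\<And>x y. x \<in> carrier ?F \<Longrightarrow> y \<in> carrier ?F \<Longrightarrow> f (x \<oplus>\<^bsub>?F\<^esub> y) = f x \<oplus>\<^bsub>?G\<^esub> f y"
    and fsm: "\<And>x r. x \<in> carrier ?F \<Longrightarrow> r \<in> carrier ?R \<Longrightarrow> f (rsmult ?F x r) = rsmult ?G (f x) r"
    using f by (auto simp: rhom_def)
  have smF: "\<And>x r. x \<in> carrier ?F \<Longrightarrow> r \<in> carrier ?R \<Longrightarrow> rsmult ?F x r \<in> carrier ?F"
    using F by (simp add: right_module_def)
  have vj: "\<And>j. j < m \<Longrightarrow> v j \<in> carrier ?R" using v by (simp add: free_simps)
  have "f v = f (lsum ?F (\<lambda>j. rsmult ?F (unitv ?R j) (v j)) m)"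
    using free_decomp[OF R v] by simp
  also have "\<dots> = lsum ?G (\<lambda>j. f (rsmult ?F (unitv ?R j) (v j))) m"
    by (rule additive_lsum[where M="?F" and N="?G"])
       (use fc fa F.abelian_group_axioms G.abelian_group_axioms smF unitv_carrier[OF R] vj in auto)
  also have "\<dots> = lsum ?G (\<lambda>j. rsmult ?G (f (unitv ?R j)) (v j)) m"
    by (rule G.lsum_cong) (use fsm unitv_carrier[OF R] vj in auto)
  finally have "f v i = lsum ?G (\<lambda>j. rsmult ?G (f (unitv ?R j)) (v j)) m i" by simp
  also have "\<dots> = lsum ?R (\<lambda>j. f (unitv ?R j) i \<otimes>\<^bsub>?R\<^esub> v j) m"
    using i by (simp add: lsum_free_apply free_simps)
  also have "\<dots> = (\<lambda>a c. \<Sum>j<m. ip (f (unitv ?R j) i a) (\<lambda>b. v j b c))"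
    by (simp add: rcfm_lsum rcfm_mult_ip)
  finally show ?thesis .
qed

lemma f_kernel:
  fixes f :: "(nat \<Rightarrow> nat \<Rightarrow> nat \<Rightarrow> 'k::field) \<Rightarrow> (nat \<Rightarrow> nat \<Rightarrow> nat \<Rightarrow> 'k)"
  assumes f: "f \<in> rhom (RCFM :: (nat \<Rightarrow> nat \<Rightarrow> 'k) ring) (free_rmod RCFM m) (free_rmod RCFM n)"
    and v: "v \<in> carrier (free_rmod (RCFM :: (nat \<Rightarrow> nat \<Rightarrow> 'k) ring) m)"
  shows "f v = \<zero>\<^bsub>free_rmod (RCFM :: (nat \<Rightarrow> nat \<Rightarrow> 'k) ring) n\<^esub> \<longleftrightarrow>
    (\<forall>c. col m v c \<in> {w. fin w \<and> (\<forall>\<alpha>. ip (rho m n (\<lambda>j. f (unitv RCFM j)) \<alpha>) w = 0)})"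
proof -
  let ?R = "RCFM :: (nat \<Rightarrow> nat \<Rightarrow> 'k) ring"
  have R: "ring ?R" by (rule ring_RCFM)
  let ?Fm = "\<lambda>j. f (unitv ?R j)"
  have Fc: "?Fm j i \<in> carrier ?R" if "j < m" "i < n" for j i
  proof -
    have "?Fm j \<in> carrier (free_rmod ?R n)" using f unitv_carrier[OF R that(1)] by (auto simp: rhom_def)
    then show ?thesis using that(2) by (simp add: free_simps)
  qed
  have fvc: "f v \<in> carrier (free_rmod ?R n)" using f v by (auto simp: rhom_def)
  have key: "f v i a c = ip (rho m n ?Fm (Inl (i, a))) (col m v c)" if "i < n" for i a c
    using f_repr[OF f v that] ip_rho_Inl[of m ?Fm i n a v c] Fc that by simp
  show ?thesis
  proof
    assume z: "f v = \<zero>\<^bsub>free_rmod ?R n\<^esub>"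
    show "\<forall>c. col m v c \<in> {w. fin w \<and> (\<forall>\<alpha>. ip (rho m n ?Fm \<alpha>) w = 0)}"
    proof (intro allI CollectI conjI)
      fix c \<alpha>
      show "fin (col m v c)" by (rule fin_col[OF v])
      show "ip (rho m n ?Fm \<alpha>) (col m v c) = 0"
      proof (cases \<alpha>)
        case (Inl ia)
        obtain i a where ia: "ia = (i, a)" by (cases ia)
        show ?thesis
        proof (cases "i < n")
          case True
          then show ?thesis using key[OF True, of a c] z by (simp add: Inl ia free_simps rcfm_zero)
        next
          case False then show ?thesis by (simp add: Inl ia ip_rho_other)
        qed
      next
        case (Inr p) then show ?thesis by (simp add: ip_rho_Inr)
      qed
    qed
  next
    assume H: "\<forall>c. col m v c \<in> {w. fin w \<and> (\<forall>\<alpha>. ip (rho m n ?Fm \<alpha>) w = 0)}"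
    show "f v = \<zero>\<^bsub>free_rmod ?R n\<^esub>"
    proof (rule ext)
      fix i
      show "f v i = \<zero>\<^bsub>free_rmod ?R n\<^esub> i"
      proof (cases "i < n")
        case True
        have "f v i a c = 0" for a c using key[OF True, of a c] H by auto
        then show ?thesis by (simp add: free_simps rcfm_zero fun_eq_iff)
      next
        case False
        then show ?thesis using fvc by (simp add: free_simps)
      qed
    qed
  qed
qed


locale Qctx =
  fixes m :: nat and K :: "(nat \<times> nat \<Rightarrow> 'k::field) set" and Q :: "nat \<times> nat \<Rightarrow> nat \<times> nat \<Rightarrow> 'k"
  assumes Qrow: "\<And>t. finite {s. Q t s \<noteq> 0}" and Qcol: "\<And>s. finite {t. Q t s \<noteq> 0}"
    and QK: "\<And>w. fin w \<Longrightarrow> (\<lambda>t. ip w (Q t)) \<in> K" and Qfix: "\<And>w. w \<in> K \<Longrightarrow> (\<lambda>t. ip w (Q t)) = w"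
    and Kfin: "\<And>w. w \<in> K \<Longrightarrow> fin w" and Kout: "\<And>w j b. w \<in> K \<Longrightarrow> m \<le> j \<Longrightarrow> w (j, b) = 0"
begin

definition Em :: "(nat \<Rightarrow> nat \<Rightarrow> nat \<Rightarrow> 'k) \<Rightarrow> (nat \<Rightarrow> nat \<Rightarrow> nat \<Rightarrow> 'k)" where
  "Em v = (\<lambda>j. if j < m then (\<lambda>b c. col m v c (j, b) - ip (col m v c) (Q (j, b))) else (\<lambda>b c. 0))"

abbreviation "FF \<equiv> free_rmod (RCFM :: (nat \<Rightarrow> nat \<Rightarrow> 'k) ring) m"

lemma col_Em:
  assumes v: "v \<in> carrier FF"
  shows "col m (Em v) c = (\<lambda>p. col m v c p - ip (col m v c) (Q p))"
proof (rule ext)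
  fix p :: "nat \<times> nat"
  obtain j b where p: "p = (j, b)" by (cases p)
  show "col m (Em v) c p = col m v c p - ip (col m v c) (Q p)"
  proof (cases "j < m")
    case True then show ?thesis by (simp add: p col_def Em_def)
  next
    case False
    have "(\<lambda>t. ip (col m v c) (Q t)) (j, b) = 0" by (rule Kout[OF QK[OF fin_col[OF v]]]) (use False in simp)
    then show ?thesis using False by (simp add: p col_def Em_def)
  qed
qed

lemma ipQ_nz: "ip w (Q p) \<noteq> 0 \<Longrightarrow> fin w \<Longrightarrow> \<exists>s. Q p s \<noteq> 0 \<and> w s \<noteq> 0"
proof -
  assume nz: "ip w (Q p) \<noteq> 0" and w: "fin w"
  have "ip w (Q p) = (\<Sum>s\<in>{s. Q p s \<noteq> 0}. w s * Q p s)"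
    by (rule ip_expand_r[OF w Qrow]) simp
  with nz obtain s where "s \<in> {s. Q p s \<noteq> 0}" "w s * Q p s \<noteq> 0"
    by (metis (no_types, lifting) sum.neutral)
  then show ?thesis by (intro exI[of _ s]) auto
qed

lemma Em_carrier:
  assumes v: "v \<in> carrier FF"
  shows "Em v \<in> carrier FF"
proof -
  have vj: "\<And>j. j < m \<Longrightarrow> v j \<in> rcfm_carrier" using v by (simp add: free_carrier_rcfm)
  have "Em v j \<in> rcfm_carrier" if j: "j < m" for j
  proof -
    have row: "finite {c. Em v j b c \<noteq> 0}" for b
    proof (rule finite_subset)
      let ?S = "{s. Q (j, b) s \<noteq> 0}"
      show "{c. Em v j b c \<noteq> 0} \<subseteq> {c. v j b c \<noteq> 0} \<union> (\<Union>s\<in>?S. {c. col m v c s \<noteq> 0})"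
      proof
        fix c assume "c \<in> {c. Em v j b c \<noteq> 0}"
        then have "col m v c (j, b) \<noteq> 0 \<or> ip (col m v c) (Q (j, b)) \<noteq> 0" using j by (auto simp: Em_def)
        then show "c \<in> {c. v j b c \<noteq> 0} \<union> (\<Union>s\<in>?S. {c. col m v c s \<noteq> 0})"
          using ipQ_nz[OF _ fin_col[OF v]] j by (auto simp: col_def)
      qed
      have "finite {c. col m v c s \<noteq> 0}" for s
      proof -
        obtain j' b' where s: "s = (j', b')" by (cases s)
        show ?thesis
        proof (cases "j' < m")
          case True then show ?thesis using vj[OF True] by (simp add: s col_def rcfm_carrier_def)
        next
          case False then show ?thesis by (simp add: s col_def)
        qed
      qed
      then show "finite ({c. v j b c \<noteq> 0} \<union> (\<Union>s\<in>?S. {c. col m v c s \<noteq> 0}))"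
        using vj[OF j] Qrow by (auto simp: rcfm_carrier_def)
    qed
    have cl: "finite {b. Em v j b c \<noteq> 0}" for c
    proof (rule finite_subset)
      let ?S = "{s. col m v c s \<noteq> 0}"
      show "{b. Em v j b c \<noteq> 0} \<subseteq> {b. v j b c \<noteq> 0} \<union> snd ` (\<Union>s\<in>?S. {t. Q t s \<noteq> 0})"
      proof
        fix b assume "b \<in> {b. Em v j b c \<noteq> 0}"
        then have "col m v c (j, b) \<noteq> 0 \<or> ip (col m v c) (Q (j, b)) \<noteq> 0" using j by (auto simp: Em_def)
        then show "b \<in> {b. v j b c \<noteq> 0} \<union> snd ` (\<Union>s\<in>?S. {t. Q t s \<noteq> 0})"
        proof
          assume "col m v c (j, b) \<noteq> 0" then show ?thesis using j by (simp add: col_def)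
        next
          assume "ip (col m v c) (Q (j, b)) \<noteq> 0"
          then obtain s where "Q (j, b) s \<noteq> 0" "col m v c s \<noteq> 0" using ipQ_nz[OF _ fin_col[OF v]] by blast
          then have "(j, b) \<in> (\<Union>s\<in>?S. {t. Q t s \<noteq> 0})" by blast
          then show ?thesis by (metis UnI2 image_eqI snd_conv)
        qed
      qed
      show "finite ({b. v j b c \<noteq> 0} \<union> snd ` (\<Union>s\<in>?S. {t. Q t s \<noteq> 0}))"
        using vj[OF j] Qcol fin_col[OF v, of c] by (auto simp: rcfm_carrier_def fin_def)
    qed
    show ?thesis using row cl by (simp add: rcfm_carrier_def)
  qed
  then show ?thesis by (simp add: free_carrier_rcfm Em_def)
qed


lemma FF_add: "v \<oplus>\<^bsub>FF\<^esub> w = (\<lambda>j. if j < m then (\<lambda>a c. v j a c + w j a c) else (\<lambda>a c. 0))"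
  by (simp add: free_simps rcfm_add rcfm_zero cong: if_cong)
lemma FF_smult: "rsmult FF v r = (\<lambda>j. if j < m then (\<lambda>a c. ip (v j a) (\<lambda>l. r l c)) else (\<lambda>a c. 0))"
  by (simp add: free_simps rcfm_mult_ip rcfm_zero cong: if_cong)
lemma FF_zero: "\<zero>\<^bsub>FF\<^esub> = (\<lambda>j a c. 0)"
  by (simp add: free_simps rcfm_zero)

lemma col_add: "col m (v \<oplus>\<^bsub>FF\<^esub> w) c = (\<lambda>p. col m v c p + col m w c p)"
  by (auto simp: FF_add col_def fun_eq_iff)

lemma Em_add:
  assumes v: "v \<in> carrier FF" and w: "w \<in> carrier FF"
  shows "Em (v \<oplus>\<^bsub>FF\<^esub> w) = Em v \<oplus>\<^bsub>FF\<^esub> Em w"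
proof (rule ext)
  fix j
  show "Em (v \<oplus>\<^bsub>FF\<^esub> w) j = (Em v \<oplus>\<^bsub>FF\<^esub> Em w) j"
  proof (cases "j < m")
    case True
    have "ip (col m (v \<oplus>\<^bsub>FF\<^esub> w) c) (Q (j, b)) = ip (col m v c) (Q (j, b)) + ip (col m w c) (Q (j, b))" for b c
      unfolding col_add by (rule ip_add_left[OF fin_col[OF v] fin_col[OF w]])
    note ipa = this
    have e1: "Em (v \<oplus>\<^bsub>FF\<^esub> w) j = (\<lambda>b c. col m (v \<oplus>\<^bsub>FF\<^esub> w) c (j, b) - ip (col m (v \<oplus>\<^bsub>FF\<^esub> w) c) (Q (j, b)))"
      using True by (simp add: Em_def)
    have e2: "(Em v \<oplus>\<^bsub>FF\<^esub> Em w) j = (\<lambda>b c. Em v j b c + Em w j b c)"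
      using True by (simp add: FF_add)
    show ?thesis unfolding e1 e2 ipa unfolding col_add using True by (simp add: Em_def fun_eq_iff algebra_simps)
  next
    case False then show ?thesis by (simp add: Em_def FF_add)
  qed
qed

definition "rw v p = (\<lambda>l. col m v l p)"

lemma fin_rw: assumes v: "v \<in> carrier FF" shows "fin (rw v p)"
proof -
  obtain j b where p: "p = (j, b)" by (cases p)
  show ?thesis
  proof (cases "j < m")
    case True
    have "v j \<in> rcfm_carrier" using v True by (simp add: free_carrier_rcfm)
    then show ?thesis using True by (simp add: rw_def p col_def fin_def rcfm_carrier_def)
  next
    case False then show ?thesis by (simp add: rw_def p col_def)
  qed
qed

lemma col_smult:
  assumes v: "v \<in> carrier FF"
  shows "col m (rsmult FF v r) c = (\<lambda>p. ip (rw v p) (\<lambda>l. r l c))"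
proof (rule ext)
  fix p :: "nat \<times> nat"
  obtain j b where p: "p = (j, b)" by (cases p)
  show "col m (rsmult FF v r) c p = ip (rw v p) (\<lambda>l. r l c)"
    by (cases "j < m") (simp_all add: p col_def FF_smult rw_def)
qed

lemma Em_smult:
  assumes v: "v \<in> carrier FF" and r: "r \<in> carrier (RCFM :: (nat \<Rightarrow> nat \<Rightarrow> 'k) ring)"
  shows "Em (rsmult FF v r) = rsmult FF (Em v) r"
proof (rule ext)
  fix j
  show "Em (rsmult FF v r) j = rsmult FF (Em v) r j"
  proof (cases "j < m")
    case False then show ?thesis by (simp add: Em_def FF_smult)
  next
    case True
    have vr: "rsmult FF v r \<in> carrier FF"
    proof -
      have "right_module (RCFM :: (nat \<Rightarrow> nat \<Rightarrow> 'k) ring) FF" by (rule free_right_module[OF ring_RCFM])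
      then show ?thesis using v r by (simp add: right_module_def)
    qed
    have eq: "ip (col m (rsmult FF v r) c) (Q p) = ip (\<lambda>l. ip (col m v l) (Q p)) (\<lambda>l. r l c)" for p c
    proof -
      let ?SQ = "{s. Q p s \<noteq> 0}"
      let ?L = "\<Union>s\<in>?SQ. {l. col m v l s \<noteq> 0}"
      have fSQ: "finite ?SQ" by (rule Qrow)
      have fL: "finite ?L" using fSQ fin_rw[OF v] by (auto simp: fin_def rw_def)
      define g where "g = (\<lambda>l. ip (col m v l) (Q p))"
      have subg: "{l. g l \<noteq> 0} \<subseteq> ?L"
      proof
        fix l assume "l \<in> {l. g l \<noteq> 0}"
        then have "ip (col m v l) (Q p) \<noteq> 0" by (simp add: g_def)
        then obtain s where "Q p s \<noteq> 0 \<and> col m v l s \<noteq> 0"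
          using ipQ_nz[OF _ fin_col[OF v]] by blast
        then show "l \<in> ?L" by blast
      qed
      have fg: "fin g" unfolding fin_def using finite_subset[OF subg fL] .
      have "ip (col m (rsmult FF v r) c) (Q p) = (\<Sum>s\<in>?SQ. col m (rsmult FF v r) c s * Q p s)"
        by (rule ip_expand_r[OF fin_col[OF vr] fSQ]) simp
      also have "\<dots> = (\<Sum>s\<in>?SQ. (\<Sum>l\<in>?L. col m v l s * r l c) * Q p s)"
      proof (rule sum.cong[OF refl])
        fix s assume s: "s \<in> ?SQ"
        have "ip (rw v s) (\<lambda>l. r l c) = (\<Sum>l\<in>?L. rw v s l * r l c)"
          by (rule ip_expand_l[OF fin_rw[OF v] fL]) (use s in \<open>auto simp: rw_def\<close>)
        then show "col m (rsmult FF v r) c s * Q p s = (\<Sum>l\<in>?L. col m v l s * r l c) * Q p s"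
          by (simp add: col_smult[OF v] rw_def)
      qed
      also have "\<dots> = (\<Sum>l\<in>?L. (\<Sum>s\<in>?SQ. col m v l s * Q p s) * r l c)"
        by (simp add: sum_distrib_right sum_distrib_left) (subst sum.swap, simp add: mult.commute mult.left_commute)
      also have "\<dots> = (\<Sum>l\<in>?L. g l * r l c)"
      proof (rule sum.cong[OF refl])
        fix l
        have "g l = (\<Sum>s\<in>?SQ. col m v l s * Q p s)"
          unfolding g_def by (rule ip_expand_r[OF fin_col[OF v] fSQ]) simp
        then show "(\<Sum>s\<in>?SQ. col m v l s * Q p s) * r l c = g l * r l c" by simp
      qed
      also have "\<dots> = ip g (\<lambda>l. r l c)"
        by (rule ip_expand_l[OF fg fL subg, symmetric])
      finally show ?thesis by (simp add: g_def)
    qed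
    have fg2: "fin (\<lambda>l. ip (col m v l) (Q p))" for p
    proof -
      let ?SQ = "{s. Q p s \<noteq> 0}"
      let ?L = "\<Union>s\<in>?SQ. {l. col m v l s \<noteq> 0}"
      have fL: "finite ?L" using Qrow fin_rw[OF v] by (auto simp: fin_def rw_def)
      have "{l. ip (col m v l) (Q p) \<noteq> 0} \<subseteq> ?L"
      proof
        fix l assume "l \<in> {l. ip (col m v l) (Q p) \<noteq> 0}"
        then have "ip (col m v l) (Q p) \<noteq> 0" by simp
        then obtain s where "Q p s \<noteq> 0 \<and> col m v l s \<noteq> 0"
          using ipQ_nz[OF _ fin_col[OF v]] by blast
        then show "l \<in> ?L" by blast
      qed
      then show ?thesis unfolding fin_def using fL by (rule finite_subset)
    qed
    have "Em (rsmult FF v r) j b c = rsmult FF (Em v) r j b c" for b c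
    proof -
      have row: "Em v j b = (\<lambda>l. rw v (j, b) l - ip (col m v l) (Q (j, b)))"
        using True by (simp add: Em_def rw_def fun_eq_iff)
      have "rsmult FF (Em v) r j b c = ip (Em v j b) (\<lambda>l. r l c)" using True by (simp add: FF_smult)
      also have "\<dots> = ip (rw v (j, b)) (\<lambda>l. r l c) - ip (\<lambda>l. ip (col m v l) (Q (j, b))) (\<lambda>l. r l c)"
        unfolding row by (rule ip_diff_left[OF fin_rw[OF v] fg2])
      also have "\<dots> = Em (rsmult FF v r) j b c"
        using True eq[of c "(j, b)"] by (simp add: Em_def col_smult[OF v])
      finally show ?thesis by simp
    qed
    then show ?thesis by (simp add: fun_eq_iff)
  qed
qed

lemma Em_idem:
  assumes v: "v \<in> carrier FF"
  shows "Em (Em v) = Em v"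
proof (rule ext)
  fix j
  show "Em (Em v) j = Em v j"
  proof (cases "j < m")
    case False then show ?thesis by (simp add: Em_def)
  next
    case True
    have z: "ip (col m (Em v) c) (Q p) = 0" for c p
    proof -
      let ?w = "col m v c"
      let ?Qw = "\<lambda>t. ip ?w (Q t)"
      have fw: "fin ?w" by (rule fin_col[OF v])
      have QwK: "?Qw \<in> K" by (rule QK[OF fw])
      have fQw: "fin ?Qw" by (rule Kfin[OF QwK])
      have "ip (col m (Em v) c) (Q p) = ip (\<lambda>t. ?w t - ?Qw t) (Q p)" by (simp add: col_Em[OF v])
      also have "\<dots> = ip ?w (Q p) - ip ?Qw (Q p)" by (rule ip_diff_left[OF fw fQw])
      also have "ip ?Qw (Q p) = ?Qw p" using fun_cong[OF Qfix[OF QwK], of p] by simp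
      finally show ?thesis by simp
    qed
    show ?thesis using True z by (simp add: Em_def[of "Em v"] col_def fun_eq_iff)
  qed
qed

lemma Em_ker:
  assumes v: "v \<in> carrier FF"
  shows "Em v = \<zero>\<^bsub>FF\<^esub> \<longleftrightarrow> (\<forall>c. col m v c \<in> K)"
proof
  assume z: "Em v = \<zero>\<^bsub>FF\<^esub>"
  show "\<forall>c. col m v c \<in> K"
  proof
    fix c
    have "col m v c = (\<lambda>t. ip (col m v c) (Q t))"
    proof (rule ext)
      fix p :: "nat \<times> nat"
      obtain j b where p: "p = (j, b)" by (cases p)
      show "col m v c p = ip (col m v c) (Q p)"
      proof (cases "j < m")
        case True
        have "Em v j b c = 0" using z by (simp add: FF_zero)
        then show ?thesis using True by (simp add: Em_def p)
      next
        case False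
        have "(\<lambda>t. ip (col m v c) (Q t)) (j, b) = 0" by (rule Kout[OF QK[OF fin_col[OF v]]]) (use False in simp)
        then show ?thesis using False by (simp add: p col_def)
      qed
    qed
    note e = this
    show "col m v c \<in> K" by (subst e) (rule QK[OF fin_col[OF v]])
  qed
next
  assume H: "\<forall>c. col m v c \<in> K"
  have "ip (col m v c) (Q p) = col m v c p" for c p using fun_cong[OF Qfix[OF H[rule_format, of c]], of p] by simp
  then show "Em v = \<zero>\<^bsub>FF\<^esub>" by (simp add: Em_def FF_zero fun_eq_iff)
qed

end


lemma exists_E:
  fixes f :: "(nat \<Rightarrow> nat \<Rightarrow> nat \<Rightarrow> 'k::field) \<Rightarrow> (nat \<Rightarrow> nat \<Rightarrow> nat \<Rightarrow> 'k)"
  assumes f: "f \<in> rhom (RCFM :: (nat \<Rightarrow> nat \<Rightarrow> 'k) ring) (free_rmod RCFM m) (free_rmod RCFM n)"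
  shows "\<exists>E. E \<in> rhom (RCFM :: (nat \<Rightarrow> nat \<Rightarrow> 'k) ring) (free_rmod RCFM m) (free_rmod RCFM m) \<and>
    (\<forall>v\<in>carrier (free_rmod RCFM m). E (E v) = E v) \<and>
    (\<forall>v\<in>carrier (free_rmod RCFM m). E v = \<zero>\<^bsub>free_rmod RCFM m\<^esub> \<longleftrightarrow> f v = \<zero>\<^bsub>free_rmod RCFM n\<^esub>)"
proof -
  let ?R = "RCFM :: (nat \<Rightarrow> nat \<Rightarrow> 'k) ring"
  have R: "ring ?R" by (rule ring_RCFM)
  let ?Fm = "\<lambda>j. f (unitv ?R j)"
  have Fc: "?Fm j i \<in> carrier ?R" if "j < m" "i < n" for j i
  proof -
    have "?Fm j \<in> carrier (free_rmod ?R n)" using f unitv_carrier[OF R that(1)] by (auto simp: rhom_def)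
    then show ?thesis using that(2) by (simp add: free_simps)
  qed
  define K where "K = {w. fin w \<and> (\<forall>\<alpha>. ip (rho m n ?Fm \<alpha>) w = 0)}"
  have fr: "fin (rho m n ?Fm \<alpha>)" for \<alpha> by (rule fin_rho) (use Fc in auto)
  obtain Q where Q: "(\<forall>t. finite {s. Q t s \<noteq> 0}) \<and> (\<forall>s. finite {t. Q t s \<noteq> 0}) \<and>
   (\<forall>w. fin w \<longrightarrow> (\<lambda>t. ip w (Q t)) \<in> K) \<and> (\<forall>w\<in>K. (\<lambda>t. ip w (Q t)) = w)"
    using core[of "rho m n ?Fm", OF fr] unfolding K_def by blast
  interpret QC: Qctx m K Q
  proof
    show "\<And>t. finite {s. Q t s \<noteq> 0}" "\<And>s. finite {t. Q t s \<noteq> 0}"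
      "\<And>w. fin w \<Longrightarrow> (\<lambda>t. ip w (Q t)) \<in> K" "\<And>w. w \<in> K \<Longrightarrow> (\<lambda>t. ip w (Q t)) = w"
      using Q by auto
    show "\<And>w. w \<in> K \<Longrightarrow> fin w" by (simp add: K_def)
    fix w j b assume w: "w \<in> K" and j: "m \<le> j"
    have "ip (rho m n ?Fm (Inr (j, b))) w = 0" using w by (simp add: K_def)
    then show "w (j, b) = 0" using j by (simp add: rho_def ip_delta_left)
  qed
  have "QC.Em \<in> rhom ?R (free_rmod ?R m) (free_rmod ?R m)"
    unfolding rhom_def using QC.Em_carrier QC.Em_add QC.Em_smult by auto
  moreover have "\<forall>v\<in>carrier (free_rmod ?R m). QC.Em (QC.Em v) = QC.Em v" using QC.Em_idem by auto
  moreover have "\<forall>v\<in>carrier (free_rmod ?R m). QC.Em v = \<zero>\<^bsub>free_rmod ?R m\<^esub> \<longleftrightarrow> f v = \<zero>\<^bsub>free_rmod ?R n\<^esub>"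
    using QC.Em_ker f_kernel[OF f] unfolding K_def by auto
  ultimately show ?thesis by blast
qed

theorem corollary7p16:
  fixes M :: "('m, nat \<Rightarrow> nat \<Rightarrow> 'k::field) rmodule"
  assumes "right_module (RCFM :: (nat \<Rightarrow> nat \<Rightarrow> 'k) ring) M"
      and "finitely_presented (RCFM :: (nat \<Rightarrow> nat \<Rightarrow> 'k) ring) M"
  shows "proj_dim_le1 (RCFM :: (nat \<Rightarrow> nat \<Rightarrow> 'k) ring) M
           TYPE(nat \<Rightarrow> nat \<Rightarrow> nat \<Rightarrow> 'k) TYPE('b)"
proof -
  let ?R = "RCFM :: (nat \<Rightarrow> nat \<Rightarrow> 'k) ring"
  have R: "ring ?R" by (rule ring_RCFM)
  obtain n m f g where f: "f \<in> rhom ?R (free_rmod ?R m) (free_rmod ?R n)"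
    and g: "g \<in> rhom ?R (free_rmod ?R n) M" and gs: "g ` carrier (free_rmod ?R n) = carrier M"
    and fim: "f ` carrier (free_rmod ?R m) = rkernel (free_rmod ?R n) M g"
    using assms(2) unfolding finitely_presented_def by (elim exE conjE) (rule that; assumption)
  obtain E where E: "E \<in> rhom ?R (free_rmod ?R m) (free_rmod ?R m)"
    and idem: "\<And>v. v \<in> carrier (free_rmod ?R m) \<Longrightarrow> E (E v) = E v"
    and ker: "\<And>v. v \<in> carrier (free_rmod ?R m) \<Longrightarrow> E v = \<zero>\<^bsub>free_rmod ?R m\<^esub> \<longleftrightarrow> f v = \<zero>\<^bsub>free_rmod ?R n\<^esub>"
    using exists_E[OF f] by (elim exE conjE) (rule that; auto)
  let ?F = "free_rmod ?R m" and ?G = "free_rmod ?R n"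
  have F: "right_module ?R ?F" by (rule free_right_module[OF R])
  have G: "right_module ?R ?G" by (rule free_right_module[OF R])
  interpret F: abelian_group ?F using F by (simp add: right_module_def)
  interpret G: abelian_group ?G using G by (simp add: right_module_def)
  have Ec: "E \<in> carrier ?F \<rightarrow> carrier ?F"
    and Ea: "\<And>x y. x \<in> carrier ?F \<Longrightarrow> y \<in> carrier ?F \<Longrightarrow> E (x \<oplus>\<^bsub>?F\<^esub> y) = E x \<oplus>\<^bsub>?F\<^esub> E y"
    using E by (auto simp: rhom_def)
  have fc: "f \<in> carrier ?F \<rightarrow> carrier ?G"
    and fa: "\<And>x y. x \<in> carrier ?F \<Longrightarrow> y \<in> carrier ?F \<Longrightarrow> f (x \<oplus>\<^bsub>?F\<^esub> y) = f x \<oplus>\<^bsub>?G\<^esub> f y"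
    and fsm: "\<And>x r. x \<in> carrier ?F \<Longrightarrow> r \<in> carrier ?R \<Longrightarrow> f (rsmult ?F x r) = rsmult ?G (f x) r"
    using f by (auto simp: rhom_def)
  have Einv: "E (\<ominus>\<^bsub>?F\<^esub> x) = \<ominus>\<^bsub>?F\<^esub> E x" if "x \<in> carrier ?F" for x
    by (rule additive_inv[where M="?F" and N="?F"]) (use Ec Ea F.abelian_group_axioms that in auto)
  have finv: "f (\<ominus>\<^bsub>?F\<^esub> x) = \<ominus>\<^bsub>?G\<^esub> f x" if "x \<in> carrier ?F" for x
    by (rule additive_inv[where M="?F" and N="?G"]) (use fc fa F.abelian_group_axioms G.abelian_group_axioms that in auto)
  have P0: "fixmod ?R n (\<lambda>v. v) = ?G" by (rule fixmod_id)
  have diff0: "a = b" if "a \<oplus>\<^bsub>M'\<^esub> \<ominus>\<^bsub>M'\<^esub> b = \<zero>\<^bsub>M'\<^esub>" "abelian_group M'" "a \<in> carrier M'" "b \<in> carrier M'" for a b and M' :: "(nat \<Rightarrow> nat \<Rightarrow> nat \<Rightarrow> 'k, nat \<Rightarrow> nat \<Rightarrow> 'k) rmodule"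
  proof -
    interpret M': abelian_group M' by fact
    have "\<ominus>\<^bsub>M'\<^esub> (\<ominus>\<^bsub>M'\<^esub> b) = a"
      by (rule M'.minus_equality) (use that in auto)
    then show ?thesis using that by simp
  qed
  have idrhom: "(\<lambda>v. v) \<in> rhom ?R ?G ?G" by (auto simp: rhom_def)
  have carrE: "carrier (fixmod ?R m E) \<subseteq> carrier ?F" by (auto simp: fixmod_simps)
  show ?thesis
    unfolding proj_dim_le1_def
  proof (rule exI[of _ ?G], rule exI[of _ "fixmod ?R m E"], rule exI[of _ f], rule exI[of _ g], intro conjI)
    show "right_module ?R ?G" by (rule G)
    show "right_module ?R (fixmod ?R m E)" by (rule fixmod_right_module[OF R E])
    have "projective ?R (fixmod ?R n (\<lambda>v. v)) TYPE('b)"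
      by (rule fixmod_projective[OF R idrhom]) simp
    then show "projective ?R ?G TYPE('b)" by (simp only: P0)
    show "projective ?R (fixmod ?R m E) TYPE('b)" by (rule fixmod_projective[OF R E idem])
    show "f \<in> rhom ?R (fixmod ?R m E) ?G"
      using f unfolding rhom_def fixmod_simps by auto
    show "g \<in> rhom ?R ?G M" by (rule g)
    show "g ` carrier ?G = carrier M" by (rule gs)
    show "inj_on f (carrier (fixmod ?R m E))"
    proof (rule inj_onI)
      fix x y assume x: "x \<in> carrier (fixmod ?R m E)" and y: "y \<in> carrier (fixmod ?R m E)" and fxy: "f x = f y"
      have xc: "x \<in> carrier ?F" "E x = x" and yc: "y \<in> carrier ?F" "E y = y"
        using x y by (auto simp: fixmod_simps)
      have "f (x \<oplus>\<^bsub>?F\<^esub> \<ominus>\<^bsub>?F\<^esub> y) = f x \<oplus>\<^bsub>?G\<^esub> \<ominus>\<^bsub>?G\<^esub> f y"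
        using fa finv xc yc by simp
      also have "\<dots> = \<zero>\<^bsub>?G\<^esub>" using fxy fc yc by (metis G.r_neg PiE)
      finally have "E (x \<oplus>\<^bsub>?F\<^esub> \<ominus>\<^bsub>?F\<^esub> y) = \<zero>\<^bsub>?F\<^esub>"
        using ker xc yc by simp
      then have "x \<oplus>\<^bsub>?F\<^esub> \<ominus>\<^bsub>?F\<^esub> y = \<zero>\<^bsub>?F\<^esub>"
        using Ea Einv xc yc by simp
      then show "x = y" by (rule diff0) (use F.abelian_group_axioms xc yc in auto)
    qed
    have "f ` carrier (fixmod ?R m E) = f ` carrier ?F"
    proof
      show "f ` carrier (fixmod ?R m E) \<subseteq> f ` carrier ?F" using carrE by auto
      show "f ` carrier ?F \<subseteq> f ` carrier (fixmod ?R m E)"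
      proof
        fix z assume "z \<in> f ` carrier ?F"
        then obtain y where y: "y \<in> carrier ?F" and z: "z = f y" by blast
        have Ey: "E y \<in> carrier ?F" using Ec y by auto
        have "E (y \<oplus>\<^bsub>?F\<^esub> \<ominus>\<^bsub>?F\<^esub> E y) = \<zero>\<^bsub>?F\<^esub>"
          using Ea Einv y Ey idem[OF y] by (simp add: F.r_neg)
        then have "f (y \<oplus>\<^bsub>?F\<^esub> \<ominus>\<^bsub>?F\<^esub> E y) = \<zero>\<^bsub>?G\<^esub>"
          using ker y Ey by simp
        then have "f y \<oplus>\<^bsub>?G\<^esub> \<ominus>\<^bsub>?G\<^esub> f (E y) = \<zero>\<^bsub>?G\<^esub>"
          using fa finv y Ey by simp
        then have "f y = f (E y)" by (rule diff0) (use G.abelian_group_axioms fc y Ey in auto)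
        moreover have "E y \<in> carrier (fixmod ?R m E)" using Ey idem[OF y] by (simp add: fixmod_simps)
        ultimately show "z \<in> f ` carrier (fixmod ?R m E)" using z by blast
      qed
    qed
    then show "f ` carrier (fixmod ?R m E) = rkernel ?G M g" using fim by simp
  qed
qed


end
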